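(* Let $s\ge1$ and $\lambda\ge1$ be integers, and let $Q\subseteq V$ be such that $|\bar N^{s-1}(v,Q)|\le\lambda$ for every $v\in V$. Assume the following. <ul> <li>For each $v\in Q$ a depth-$s$ BFS tree $T_v$ rooted at $v$ is given distributedly.</li> <li>Each $v\in Q$ knows the identifiers in $\bar N^s(v,Q)$, and knows $\bar N^{s-1}(w,Q)$ for each neighbour $w$ of $v$.</li> <li>Each node has an $a$-bit identifier unique within its distance-$s$ neighbourhood.</li> <li>Messages have $B$ bits with $B\ge\lambda$.</li> </ul> Then there is a deterministic algorithm for each of the following tasks. <ul> <li>(Broadcast) Each $v\in Q$ sends an $m$-bit message $\mathrm{msg}_v$ to all $w$ with $\operatorname{dist}_G(v,w)\le s$, in $O(s+m\lambda/B)$ rounds.</li> <li>($Q$-message) Each $v\in Q$ sends an individual $m$-bit message $\mathrm{msg}_{v,w}$ to each $w\in\bar N^s(v,Q)$, in $O(s+(m+a)\lambda^2/B)$ rounds.</li> </ul>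
   Context: Setting: synchronous message passing on a connected simple undirected graph $G=(V,E)$ with maximum degree $\Delta$. In each round each node may send a $B$-bit message to each neighbour. Notation: for $s\ge0$ and $X\subseteq V$, $\bar N^s(v,X)=\{w\in X:\operatorname{dist}_G(v,w)\le s\}$; this includes $v$ itself if $v\in X$. A depth-$s$ BFS tree rooted at $x$ is a tree subgraph $T$ of $G$ with vertex set $\{w:\operatorname{dist}_G(x,w)\le s\}$ and $\operatorname{dist}_T(w,x)=\operatorname{dist}_G(w,x)$ for all its vertices. It is given distributedly if each of its nodes knows the root's identifier, its parent and its children in $T$. *)

theory Defs
  imports Complex_Main
begin

text \<open>A graph is a vertex set V (of naturals) with a symmetric irreflexive
edge relation E. Vertices are naturals so that an algorithm cannot depend
on the vertex type.\<close>

definition simple_connected_graph :: "nat set \<Rightarrow> (nat \<times> nat) set \<Rightarrow> bool" where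
  "simple_connected_graph V E \<longleftrightarrow> finite V \<and> V \<noteq> {} \<and> E \<subseteq> V \<times> V \<and> sym E
     \<and> (\<forall>v. (v, v) \<notin> E) \<and> (\<forall>u\<in>V. \<forall>w\<in>V. (u, w) \<in> E\<^sup>*)"

definition dist :: "(nat \<times> nat) set \<Rightarrow> nat \<Rightarrow> nat \<Rightarrow> nat" where
  "dist E u w = (LEAST k. (u, w) \<in> E ^^ k)"

definition nbhd :: "(nat \<times> nat) set \<Rightarrow> nat \<Rightarrow> nat \<Rightarrow> nat set \<Rightarrow> nat set" where
  "nbhd E s v X = {w \<in> X. dist E v w \<le> s}"

text \<open>A connected graph on k vertices is a tree iff it has k-1 edges (here 2(k-1)
ordered pairs).\<close>
definition bfs_tree :: "nat set \<Rightarrow> (nat \<times> nat) set \<Rightarrow> nat \<Rightarrow> nat \<Rightarrow> (nat \<times> nat) set \<Rightarrow> bool" where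
  "bfs_tree V E s x T \<longleftrightarrow>
     T \<subseteq> E \<and> sym T \<and> T \<subseteq> nbhd E s x V \<times> nbhd E s x V
     \<and> (\<forall>w \<in> nbhd E s x V. (w, x) \<in> T\<^sup>* \<and> dist T w x = dist E w x)
     \<and> card T = 2 * (card (nbhd E s x V) - 1)"

definition tree_parent :: "(nat \<times> nat) set \<Rightarrow> nat \<Rightarrow> (nat \<times> nat) set \<Rightarrow> nat \<Rightarrow> nat" where
  "tree_parent E x T w = (THE u. (w, u) \<in> T \<and> dist E x u + 1 = dist E x w)"

definition port_numbering :: "nat set \<Rightarrow> (nat \<times> nat) set \<Rightarrow> (nat \<Rightarrow> nat) \<Rightarrow> (nat \<Rightarrow> nat \<Rightarrow> nat) \<Rightarrow> bool" where
  "port_numbering V E deg pt \<longleftrightarrow>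
     (\<forall>v\<in>V. bij_betw (pt v) {..<deg v} {w. (v, w) \<in> E})"

definition port_of :: "(nat \<Rightarrow> nat) \<Rightarrow> (nat \<Rightarrow> nat \<Rightarrow> nat) \<Rightarrow> nat \<Rightarrow> nat \<Rightarrow> nat" where
  "port_of deg pt v u = (THE p. p < deg v \<and> pt v p = u)"

type_synonym hist = "(nat \<Rightarrow> bool list) list"

text \<open>A deterministic algorithm is given by a message function f: from the
local input and the history of received messages (one per-port vector per round)
it computes the bit string to send on each port in the next round; and an output
function applied after the last round. run gives the received history of v after r rounds.\<close>
fun run :: "('i \<Rightarrow> hist \<Rightarrow> nat \<Rightarrow> bool list) \<Rightarrow> (nat \<Rightarrow> 'i) \<Rightarrow> (nat \<Rightarrow> nat)
             \<Rightarrow> (nat \<Rightarrow> nat \<Rightarrow> nat) \<Rightarrow> nat \<Rightarrow> nat \<Rightarrow> hist" where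
  "run f inp deg pt v 0 = []"
| "run f inp deg pt v (Suc r) = run f inp deg pt v r @
     [\<lambda>p. if p < deg v
          then f (inp (pt v p)) (run f inp deg pt (pt v p) r) (port_of deg pt (pt v p) v)
          else []]"

definition bandwidth_ok :: "nat \<Rightarrow> nat \<Rightarrow> nat set \<Rightarrow> ('i \<Rightarrow> hist \<Rightarrow> nat \<Rightarrow> bool list)
    \<Rightarrow> (nat \<Rightarrow> 'i) \<Rightarrow> (nat \<Rightarrow> nat) \<Rightarrow> (nat \<Rightarrow> nat \<Rightarrow> nat) \<Rightarrow> bool" where
  "bandwidth_ok B R V f inp deg pt \<longleftrightarrow>
     (\<forall>r<R. \<forall>v\<in>V. \<forall>p<deg v. length (f (inp v) (run f inp deg pt v r) p) \<le> B)"

record node_input =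
  nid :: "bool list"
  ndeg :: nat
  inQ :: bool
  trees :: "(bool list \<times> nat option \<times> nat set) set"
  qball :: "bool list set"
  nbrQ :: "nat \<Rightarrow> bool list set"
  payload :: "(bool list \<times> bool list) set"

text \<open>Local input of v: its identifier, degree, whether it is in Q; for every root
r in Q within distance s: (id r, port to its parent in T_r (None at the root),
ports to its children in T_r); if v in Q the ids of bar N^s(v,Q), and for each
port p the ids of bar N^(s-1)(w,Q), w the neighbour at port p; and the
task-specific payload.\<close>
definition mk_input :: "nat set \<Rightarrow> (nat \<times> nat) set \<Rightarrow> (nat \<Rightarrow> nat) \<Rightarrow> (nat \<Rightarrow> nat \<Rightarrow> nat)
    \<Rightarrow> nat set \<Rightarrow> (nat \<Rightarrow> bool list) \<Rightarrow> (nat \<Rightarrow> (nat \<times> nat) set) \<Rightarrow> nat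
    \<Rightarrow> (nat \<Rightarrow> (bool list \<times> bool list) set) \<Rightarrow> nat \<Rightarrow> node_input" where
  "mk_input V E deg pt Q idf Tr s pay v =
    \<lparr> nid = idf v, ndeg = deg v, inQ = (v \<in> Q),
      trees = {(idf r,
                (if v = r then None else Some (port_of deg pt v (tree_parent E r (Tr r) v))),
                {p. p < deg v \<and> (v, pt v p) \<in> Tr r \<and> dist E r (pt v p) = dist E r v + 1})
               | r. r \<in> Q \<and> dist E r v \<le> s},
      qball = (if v \<in> Q then idf ` nbhd E s v Q else {}),
      nbrQ = (\<lambda>p. if v \<in> Q \<and> p < deg v then idf ` nbhd E (s - 1) (pt v p) Q else {}),
      payload = (if v \<in> Q then pay v else {}) \<rparr>"

definition setting :: "nat set \<Rightarrow> (nat \<times> nat) set \<Rightarrow> (nat \<Rightarrow> nat) \<Rightarrow> (nat \<Rightarrow> nat \<Rightarrow> nat)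
    \<Rightarrow> nat set \<Rightarrow> (nat \<Rightarrow> bool list) \<Rightarrow> (nat \<Rightarrow> (nat \<times> nat) set) \<Rightarrow> nat \<Rightarrow> nat \<Rightarrow> nat \<Rightarrow> bool" where
  "setting V E deg pt Q idf Tr s lam a \<longleftrightarrow>
     simple_connected_graph V E \<and> port_numbering V E deg pt \<and> Q \<subseteq> V
     \<and> (\<forall>v\<in>V. card (nbhd E (s - 1) v Q) \<le> lam)
     \<and> (\<forall>r\<in>Q. bfs_tree V E s r (Tr r))
     \<and> (\<forall>v\<in>V. length (idf v) = a)
     \<and> (\<forall>v\<in>V. inj_on idf (nbhd E s v V))"

definition solves_broadcast :: "nat \<Rightarrow> nat \<Rightarrow> nat \<Rightarrow> nat \<Rightarrow> nat \<Rightarrow> nat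
    \<Rightarrow> (node_input \<Rightarrow> hist \<Rightarrow> nat \<Rightarrow> bool list)
    \<Rightarrow> (node_input \<Rightarrow> hist \<Rightarrow> (bool list \<times> bool list) set) \<Rightarrow> bool" where
  "solves_broadcast s lam m a B R f g \<longleftrightarrow>
    (\<forall>V E deg pt Q idf Tr msg.
       setting V E deg pt Q idf Tr s lam a \<and> (\<forall>v\<in>Q. length (msg v) = m) \<longrightarrow>
       (let inp = mk_input V E deg pt Q idf Tr s (\<lambda>v. {(idf v, msg v)}) in
        bandwidth_ok B R V f inp deg pt \<and>
        (\<forall>w\<in>V. g (inp w) (run f inp deg pt w R) = {(idf v, msg v) | v. v \<in> Q \<and> dist E v w \<le> s})))"

definition solves_Qmessage :: "nat \<Rightarrow> nat \<Rightarrow> nat \<Rightarrow> nat \<Rightarrow> nat \<Rightarrow> nat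
    \<Rightarrow> (node_input \<Rightarrow> hist \<Rightarrow> nat \<Rightarrow> bool list)
    \<Rightarrow> (node_input \<Rightarrow> hist \<Rightarrow> (bool list \<times> bool list) set) \<Rightarrow> bool" where
  "solves_Qmessage s lam m a B R f g \<longleftrightarrow>
    (\<forall>V E deg pt Q idf Tr msg.
       setting V E deg pt Q idf Tr s lam a
       \<and> (\<forall>v\<in>Q. \<forall>w\<in>nbhd E s v Q. length (msg v w) = m) \<longrightarrow>
       (let inp = mk_input V E deg pt Q idf Tr s
                    (\<lambda>v. {(idf w, msg v w) | w. w \<in> nbhd E s v Q}) in
        bandwidth_ok B R V f inp deg pt \<and>
        (\<forall>w\<in>Q. g (inp w) (run f inp deg pt w R) = {(idf v, msg v w) | v. v \<in> nbhd E s w Q})))"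

end

theory Submission
  imports Defs "HOL-Library.List_Lexorder"
begin

lemma dist_pow: "(u,w) \<in> E ^^ k \<Longrightarrow> (u,w) \<in> E ^^ (dist E u w) \<and> dist E u w \<le> k"
  unfolding dist_def by (metis LeastI Least_le)

lemma relpow_sym: "sym E \<Longrightarrow> (u,w) \<in> E ^^ k \<longleftrightarrow> (w,u) \<in> E ^^ k"
proof (induction k arbitrary: w)
  case 0 then show ?case by auto
next
  case (Suc k)
  show ?case
  proof
    assume "(u,w) \<in> E^^Suc k"
    then obtain y where "(u,y) \<in> E^^k" "(y,w) \<in> E" by auto
    then have "(y,u) \<in> E^^k" "(w,y) \<in> E" using Suc by (auto dest: symD)
    then show "(w,u) \<in> E^^Suc k" by (meson relpow_Suc_I2)
  next
    assume "(w,u) \<in> E^^Suc k"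
    then obtain y where "(w,y) \<in> E" "(y,u) \<in> E^^k" by (meson relpow_Suc_D2)
    then have "(u,y) \<in> E^^k" "(y,w) \<in> E" using Suc by (auto dest: symD)
    then show "(u,w) \<in> E^^Suc k" by auto
  qed
qed

lemma dist_sym: "sym E \<Longrightarrow> dist E u w = dist E w u"
  unfolding dist_def using relpow_sym by metis

lemma dist_self: "dist E u u = 0"
  unfolding dist_def by (rule Least_eq_0) simp

lemma dist_0: "(u,w) \<in> E ^^ k \<Longrightarrow> dist E u w = 0 \<Longrightarrow> u = w"
proof -
  assume a: "(u,w) \<in> E ^^ k" "dist E u w = 0"
  from dist_pow[OF a(1)] a(2) show "u = w" by simp
qed

lemma dist_step: "(x,u) \<in> E ^^ k \<Longrightarrow> (u,v) \<in> E \<Longrightarrow> dist E x v \<le> dist E x u + 1"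
proof -
  assume a: "(x,u) \<in> E ^^ k" "(u,v) \<in> E"
  then have "(x,u) \<in> E ^^ dist E x u" using dist_pow by metis
  then have "(x,v) \<in> E ^^ Suc (dist E x u)" using a by auto
  then show ?thesis using dist_pow by fastforce
qed

lemma rtrancl_pow: "(u,w) \<in> E\<^sup>* \<Longrightarrow> \<exists>k. (u,w) \<in> E^^k"
  using rtrancl_power by blast


locale SL =
  fixes V E deg pt Q idf Tr s lam a
  assumes st: "setting V E deg pt Q idf Tr s lam a"
begin

lemma sc: "simple_connected_graph V E" and ports: "port_numbering V E deg pt" and QV: "Q \<subseteq> V"
  and lamb: "\<And>v. v \<in> V \<Longrightarrow> card (nbhd E (s - 1) v Q) \<le> lam"
  and bfs: "\<And>r. r \<in> Q \<Longrightarrow> bfs_tree V E s r (Tr r)"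
  and idlen: "\<And>v. v \<in> V \<Longrightarrow> length (idf v) = a"
  and idinj: "\<And>v. v \<in> V \<Longrightarrow> inj_on idf (nbhd E s v V)"
  using st unfolding setting_def by blast+

lemma finV: "finite V" and EV: "E \<subseteq> V \<times> V" and symE: "sym E" and irr: "(v,v) \<notin> E"
  and conn: "u \<in> V \<Longrightarrow> w \<in> V \<Longrightarrow> (u,w) \<in> E\<^sup>*"
  using sc unfolding simple_connected_graph_def by blast+

lemma reach: "u \<in> V \<Longrightarrow> w \<in> V \<Longrightarrow> \<exists>k. (u,w) \<in> E^^k"
  by (rule rtrancl_pow[OF conn])

lemma dsym: "dist E u w = dist E w u" by (rule dist_sym[OF symE])

lemma dstep: "x \<in> V \<Longrightarrow> u \<in> V \<Longrightarrow> (u,v) \<in> E \<Longrightarrow> dist E x v \<le> dist E x u + 1"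
proof -
  assume a: "x \<in> V" "u \<in> V" "(u,v) \<in> E"
  obtain k where "(x,u) \<in> E^^k" using reach[OF a(1,2)] by blast
  then show ?thesis using dist_step a(3) by metis
qed

lemma d0: "u \<in> V \<Longrightarrow> w \<in> V \<Longrightarrow> dist E u w = 0 \<longleftrightarrow> u = w"
proof
  assume "u \<in> V" "w \<in> V" "dist E u w = 0"
  then show "u = w" using reach dist_0 by metis
qed (simp add: dist_self)

lemma Ein: "(u,v) \<in> E \<Longrightarrow> u \<in> V \<and> v \<in> V" using EV by auto

lemma Esym: "(u,v) \<in> E \<Longrightarrow> (v,u) \<in> E" using symE by (auto dest: symD)

lemma dadj: "x \<in> V \<Longrightarrow> (u,v) \<in> E \<Longrightarrow> dist E x v \<le> dist E x u + 1 \<and> dist E x u \<le> dist E x v + 1"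
proof -
  assume "x \<in> V" "(u,v) \<in> E"
  then show ?thesis using dstep[of x u v] dstep[of x v u] Ein[of u v] Esym[of u v] by simp
qed

lemma nbhd_in: "nbhd E k x X = {w \<in> X. dist E x w \<le> k}" unfolding nbhd_def by simp

context
  fixes w assumes wQ: "w \<in> Q"
begin

abbreviation "T \<equiv> Tr w"
abbreviation "N \<equiv> nbhd E s w V"

lemma wV: "w \<in> V" using wQ QV by auto

lemma TE: "T \<subseteq> E" and symT: "sym T" and TN: "T \<subseteq> N \<times> N"
  and Tdist: "c \<in> N \<Longrightarrow> (c,w) \<in> T\<^sup>* \<and> dist T c w = dist E c w"
  and cardT: "card T = 2 * (card N - 1)"
  using bfs[OF wQ] unfolding bfs_tree_def by auto

lemma finN: "finite N" using finV unfolding nbhd_def by auto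
lemma finT: "finite T" using finN TN finite_subset by blast
lemma wN: "w \<in> N" using wV dist_self unfolding nbhd_def by auto

lemma par_ex:
  assumes c: "c \<in> V" "dist E w c \<le> s" "c \<noteq> w"
  shows "\<exists>u. (c,u) \<in> T \<and> dist E w u + 1 = dist E w c"
proof -
  have cN: "c \<in> N" using c unfolding nbhd_def by auto
  have tc: "(c,w) \<in> T\<^sup>*" and te: "dist T c w = dist E c w" using Tdist[OF cN] by auto
  obtain k where "(c,w) \<in> T^^k" using rtrancl_pow[OF tc] by blast
  then have cw: "(c,w) \<in> T ^^ dist T c w" using dist_pow by metis
  have "dist E w c \<noteq> 0" using d0[OF wV c(1)] c(3) by simp
  then have "dist E c w \<noteq> 0" by (simp add: dsym)
  then obtain d' where dd: "dist T c w = Suc d'" using te not0_implies_Suc by metis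
  then have "(c,w) \<in> T ^^ Suc d'" using cw by simp
  then obtain u where cu: "(c,u) \<in> T" and uw: "(u,w) \<in> T^^d'" using relpow_Suc_D2 by metis
  have uN: "u \<in> N" using cu TN by auto
  have "dist T u w \<le> d'" using uw dist_pow by metis
  then have le: "dist E u w \<le> d'" using Tdist[OF uN] by simp
  have "(u,c) \<in> E" using cu TE Esym by auto
  then have "dist E w c \<le> dist E w u + 1" using dstep[OF wV _ \<open>(u,c) \<in> E\<close>] Ein[of u c] by simp
  moreover have "dist E w c = Suc d'" using dd te dsym[of c w] by simp
  moreover have "dist E w u \<le> d'" using le dsym[of u w] by simp
  ultimately have "dist E w u + 1 = dist E w c" by simp
  then show ?thesis using cu by blast
qed

definition "down = {(c,u). (c,u) \<in> T \<and> dist E w u + 1 = dist E w c}"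

lemma par_uniq:
  assumes "(c,u1) \<in> down" "(c,u2) \<in> down" shows "u1 = u2"
proof -
  have fd: "finite down" using finT unfolding down_def
    by (rule rev_finite_subset) auto
  have dis: "down \<inter> down\<inverse> = {}" unfolding down_def by auto
  have sub: "down \<union> down\<inverse> \<subseteq> T" using symT unfolding down_def by (auto dest: symD)
  have "card (down \<union> down\<inverse>) = 2 * card down"
    using card_Un_disjoint[OF fd _ dis] fd by (simp add: card_inverse)
  then have c1: "2 * card down \<le> 2 * (card N - 1)" using card_mono[OF finT sub] cardT by simp
  have img: "fst ` down = N - {w}"
  proof
    show "fst ` down \<subseteq> N - {w}"
    proof
      fix c assume "c \<in> fst ` down"
      then obtain u where cu: "(c,u) \<in> T" "dist E w u + 1 = dist E w c" unfolding down_def by auto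
      then have "c \<in> N" using TN by auto
      moreover have "c \<noteq> w" using cu dist_self by (metis add_is_0 one_neq_zero)
      ultimately show "c \<in> N - {w}" by auto
    qed
  next
    show "N - {w} \<subseteq> fst ` down"
    proof
      fix c assume "c \<in> N - {w}"
      then have "c \<in> V" "dist E w c \<le> s" "c \<noteq> w" unfolding nbhd_def by auto
      then obtain u where "(c,u) \<in> T \<and> dist E w u + 1 = dist E w c" using par_ex by blast
      then show "c \<in> fst ` down" unfolding down_def by force
    qed
  qed
  have "card (fst ` down) = card N - 1" using img finN wN by simp
  moreover have "card (fst ` down) \<le> card down" using fd card_image_le by blast
  ultimately have "card (fst ` down) = card down" using c1 by simp
  then have "inj_on fst down" using fd eq_card_imp_inj_on by blast
  then show ?thesis using assms inj_onD by fastforce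
qed

abbreviation "par c \<equiv> tree_parent E w T c"

lemma par_eq:
  assumes "(c,u) \<in> T" "dist E w u + 1 = dist E w c"
  shows "par c = u"
  unfolding tree_parent_def
proof (rule the_equality)
  show "(c, u) \<in> T \<and> dist E w u + 1 = dist E w c" using assms by simp
next
  fix y assume "(c, y) \<in> T \<and> dist E w y + 1 = dist E w c"
  then have "(c,y) \<in> down" "(c,u) \<in> down" using assms unfolding down_def by auto
  then show "y = u" by (rule par_uniq)
qed

lemma par_prop:
  assumes c: "c \<in> V" "dist E w c \<le> s" "c \<noteq> w"
  shows "(c, par c) \<in> T \<and> dist E w (par c) + 1 = dist E w c"
proof -
  obtain u where u: "(c,u) \<in> T" "dist E w u + 1 = dist E w c" using par_ex[OF c] by blast
  have "par c = u" by (rule par_eq[OF u])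
  then show ?thesis using u by simp
qed

end
end

definition tids :: "node_input \<Rightarrow> bool list set" where "tids x = fst ` trees x"
definition ppar :: "node_input \<Rightarrow> bool list \<Rightarrow> nat option" where
  "ppar x i = (THE pp. \<exists>ch. (i,pp,ch) \<in> trees x)"
definition pch :: "node_input \<Rightarrow> bool list \<Rightarrow> nat set" where
  "pch x i = (THE ch. \<exists>pp. (i,pp,ch) \<in> trees x)"
definition downlist :: "node_input \<Rightarrow> nat \<Rightarrow> bool list list" where
  "downlist x p = sorted_list_of_set {i \<in> tids x. p \<in> pch x i}"
definition uplist :: "node_input \<Rightarrow> nat \<Rightarrow> bool list list" where
  "uplist x p = sorted_list_of_set {i \<in> tids x. ppar x i = Some p}"
definition mymsg :: "node_input \<Rightarrow> bool list \<Rightarrow> bool list" where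
  "mymsg x i = (THE mm. (i, mm) \<in> payload x)"

context SL begin

lemma pbij: "v \<in> V \<Longrightarrow> bij_betw (pt v) {..<deg v} {w. (v, w) \<in> E}"
  using ports unfolding port_numbering_def by blast

lemma pt_E: "v \<in> V \<Longrightarrow> p < deg v \<Longrightarrow> (v, pt v p) \<in> E"
  using bij_betwE[OF pbij] by blast

lemma pt_V: "v \<in> V \<Longrightarrow> p < deg v \<Longrightarrow> pt v p \<in> V"
  using pt_E Ein by blast

lemma port_of_pt: "v \<in> V \<Longrightarrow> p < deg v \<Longrightarrow> port_of deg pt v (pt v p) = p"
  unfolding port_of_def
proof (rule the_equality)
  assume "v \<in> V" "p < deg v" then show "p < deg v \<and> pt v p = pt v p" by simp
next
  fix q assume a: "v \<in> V" "p < deg v" "q < deg v \<and> pt v q = pt v p"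
  then show "q = p" using bij_betw_imp_inj_on[OF pbij[OF a(1)]] inj_onD by fastforce
qed

lemma port_of_E: "v \<in> V \<Longrightarrow> (v,u) \<in> E \<Longrightarrow> port_of deg pt v u < deg v \<and> pt v (port_of deg pt v u) = u"
proof -
  assume a: "v \<in> V" "(v,u) \<in> E"
  then have "u \<in> pt v ` {..<deg v}" using bij_betw_imp_surj_on[OF pbij[OF a(1)]] by blast
  then obtain p where p: "p < deg v" "u = pt v p" by auto
  then show ?thesis using port_of_pt[OF a(1) p(1)] by simp
qed

definition "Qb v = {r \<in> Q. dist E r v \<le> s}"

definition "Pv v r = (if v = r then None else Some (port_of deg pt v (tree_parent E r (Tr r) v)))"
definition "Cv v r = {p. p < deg v \<and> (v, pt v p) \<in> Tr r \<and> dist E r (pt v p) = dist E r v + 1}"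

abbreviation "inp pay \<equiv> mk_input V E deg pt Q idf Tr s pay"

lemma trees_inp: "trees (inp pay v) = {(idf r, Pv v r, Cv v r) | r. r \<in> Qb v}"
  unfolding mk_input_def Qb_def Pv_def Cv_def by simp

lemma Qb_ball: "v \<in> V \<Longrightarrow> r \<in> Qb v \<Longrightarrow> r \<in> nbhd E s v V"
  unfolding Qb_def nbhd_def using QV dsym by auto

lemma Qb_inj: "v \<in> V \<Longrightarrow> r \<in> Qb v \<Longrightarrow> r' \<in> Qb v \<Longrightarrow> idf r = idf r' \<Longrightarrow> r = r'"
  using idinj Qb_ball inj_onD by metis

lemma tids_inp: "tids (inp pay v) = idf ` Qb v"
  unfolding tids_def trees_inp by force

lemma ppar_inp: "v \<in> V \<Longrightarrow> r \<in> Qb v \<Longrightarrow> ppar (inp pay v) (idf r) = Pv v r"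
  unfolding ppar_def trees_inp
proof (rule the_equality)
  assume "v \<in> V" "r \<in> Qb v" then show "\<exists>ch. (idf r, Pv v r, ch) \<in> {(idf r, Pv v r, Cv v r) |r. r \<in> Qb v}" by blast
next
  fix pp assume a: "v \<in> V" "r \<in> Qb v" "\<exists>ch. (idf r, pp, ch) \<in> {(idf r, Pv v r, Cv v r) |r. r \<in> Qb v}"
  then obtain r' where "r' \<in> Qb v" "idf r = idf r'" "pp = Pv v r'" by auto
  then show "pp = Pv v r" using Qb_inj a(1,2) by metis
qed

lemma pch_inp: "v \<in> V \<Longrightarrow> r \<in> Qb v \<Longrightarrow> pch (inp pay v) (idf r) = Cv v r"
  unfolding pch_def trees_inp
proof (rule the_equality)
  assume "v \<in> V" "r \<in> Qb v" then show "\<exists>pp. (idf r, pp, Cv v r) \<in> {(idf r, Pv v r, Cv v r) |r. r \<in> Qb v}" by blast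
next
  fix ch assume a: "v \<in> V" "r \<in> Qb v" "\<exists>pp. (idf r, pp, ch) \<in> {(idf r, Pv v r, Cv v r) |r. r \<in> Qb v}"
  then obtain r' where "r' \<in> Qb v" "idf r = idf r'" "ch = Cv v r'" by auto
  then show "ch = Cv v r" using Qb_inj a(1,2) by metis
qed

lemma finQb: "finite (Qb v)" using finV QV unfolding Qb_def by (auto intro: finite_subset)

lemma downlist_inp: "v \<in> V \<Longrightarrow> downlist (inp pay v) p = sorted_list_of_set (idf ` {r \<in> Qb v. p \<in> Cv v r})"
proof -
  assume v: "v \<in> V"
  have "{i \<in> tids (inp pay v). p \<in> pch (inp pay v) i} = idf ` {r \<in> Qb v. p \<in> Cv v r}"
    unfolding tids_inp using pch_inp[OF v] by auto
  then show ?thesis unfolding downlist_def by simp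
qed

lemma uplist_inp: "v \<in> V \<Longrightarrow> uplist (inp pay v) p = sorted_list_of_set (idf ` {r \<in> Qb v. Pv v r = Some p})"
proof -
  assume v: "v \<in> V"
  have "{i \<in> tids (inp pay v). ppar (inp pay v) i = Some p} = idf ` {r \<in> Qb v. Pv v r = Some p}"
    unfolding tids_inp using ppar_inp[OF v] by auto
  then show ?thesis unfolding uplist_def by simp
qed

end

context SL begin

lemma par_nb:
  assumes "r \<in> Q" "v \<in> V" "dist E r v \<le> s" "v \<noteq> r"
  shows "(v, tree_parent E r (Tr r) v) \<in> E \<and> dist E r (tree_parent E r (Tr r) v) + 1 = dist E r v
     \<and> (v, tree_parent E r (Tr r) v) \<in> Tr r"
  using par_prop[OF assms(1) assms(2-4)] TE[OF assms(1)] by blast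

lemma pv_some:
  assumes v: "v \<in> V" "r \<in> Qb v" "(v,u) \<in> E"
  shows "Pv v r = Some (port_of deg pt v u) \<longleftrightarrow> v \<noteq> r \<and> (v,u) \<in> Tr r \<and> dist E r u + 1 = dist E r v"
proof
  assume a: "Pv v r = Some (port_of deg pt v u)"
  then have ne: "v \<noteq> r" unfolding Pv_def by (auto split: if_splits)
  have rQ: "r \<in> Q" and ds: "dist E r v \<le> s" using v(2) unfolding Qb_def by auto
  let ?y = "tree_parent E r (Tr r) v"
  have y: "(v, ?y) \<in> E" "dist E r ?y + 1 = dist E r v" "(v, ?y) \<in> Tr r" using par_nb[OF rQ v(1) ds ne] by auto
  have "port_of deg pt v ?y = port_of deg pt v u" using a ne unfolding Pv_def by simp
  then have "?y = u" using port_of_E[OF v(1) y(1)] port_of_E[OF v(1) v(3)] by metis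
  then show "v \<noteq> r \<and> (v,u) \<in> Tr r \<and> dist E r u + 1 = dist E r v" using y ne by simp
next
  assume a: "v \<noteq> r \<and> (v,u) \<in> Tr r \<and> dist E r u + 1 = dist E r v"
  have rQ: "r \<in> Q" using v(2) unfolding Qb_def by auto
  have "tree_parent E r (Tr r) v = u" using par_eq[OF rQ] a by blast
  then show "Pv v r = Some (port_of deg pt v u)" unfolding Pv_def using a by simp
qed

lemma cv_mem:
  assumes "u \<in> V" "(u,v) \<in> E"
  shows "port_of deg pt u v \<in> Cv u r \<longleftrightarrow> (u,v) \<in> Tr r \<and> dist E r v = dist E r u + 1"
  using port_of_E[OF assms] unfolding Cv_def by auto

lemma TN': "r \<in> Q \<Longrightarrow> (x,y) \<in> Tr r \<Longrightarrow> dist E r x \<le> s \<and> dist E r y \<le> s \<and> x \<in> V \<and> y \<in> V"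
  using TN unfolding nbhd_def by blast

lemma chan_sets:
  assumes v: "v \<in> V" "(v,u) \<in> E"
  shows "{r \<in> Qb v. Pv v r = Some (port_of deg pt v u)} = {r \<in> Qb u. port_of deg pt u v \<in> Cv u r}"
proof -
  have u: "u \<in> V" "(u,v) \<in> E" using v Ein Esym by auto
  show ?thesis
  proof (intro set_eqI iffI)
    fix r assume "r \<in> {r \<in> Qb v. Pv v r = Some (port_of deg pt v u)}"
    then have r: "r \<in> Qb v" "v \<noteq> r" "(v,u) \<in> Tr r" "dist E r u + 1 = dist E r v"
      using pv_some[OF v(1) _ v(2)] by auto
    have rQ: "r \<in> Q" using r(1) unfolding Qb_def by auto
    have "(u,v) \<in> Tr r" using r(3) symT[OF rQ] by (auto dest: symD)
    moreover have "r \<in> Qb u" using r(1,4) unfolding Qb_def by auto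
    ultimately show "r \<in> {r \<in> Qb u. port_of deg pt u v \<in> Cv u r}" using cv_mem[OF u] r(4) by simp
  next
    fix r assume "r \<in> {r \<in> Qb u. port_of deg pt u v \<in> Cv u r}"
    then have r: "r \<in> Qb u" "(u,v) \<in> Tr r" "dist E r v = dist E r u + 1" using cv_mem[OF u] by auto
    have rQ: "r \<in> Q" using r(1) unfolding Qb_def by auto
    have vu: "(v,u) \<in> Tr r" using r(2) symT[OF rQ] by (auto dest: symD)
    have "dist E r v \<le> s" using TN'[OF rQ r(2)] by simp
    then have rv: "r \<in> Qb v" using rQ unfolding Qb_def by simp
    have "v \<noteq> r" using r(3) dist_self by (metis add_eq_0_iff_both_eq_0 zero_neq_one)
    then show "r \<in> {r \<in> Qb v. Pv v r = Some (port_of deg pt v u)}"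
      using pv_some[OF v(1) rv v(2)] vu r(3) rv by simp
  qed
qed

lemma chan:
  assumes "v \<in> V" "(v,u) \<in> E"
  shows "uplist (inp pay v) (port_of deg pt v u) = downlist (inp pay u) (port_of deg pt u v)"
  using uplist_inp[OF assms(1)] downlist_inp chan_sets[OF assms] Ein[OF assms(2)] by simp

lemma finnb: "finite (nbhd E k v Q)" using finV QV unfolding nbhd_def by (auto intro: finite_subset)

lemma len_down:
  assumes "v \<in> V" "p < deg v"
  shows "length (downlist (inp pay v) p) \<le> lam"
proof -
  have sub: "{r \<in> Qb v. p \<in> Cv v r} \<subseteq> nbhd E (s - 1) v Q"
  proof
    fix r assume "r \<in> {r \<in> Qb v. p \<in> Cv v r}"
    then have r: "r \<in> Q" "(v, pt v p) \<in> Tr r" "dist E r (pt v p) = dist E r v + 1"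
      unfolding Qb_def Cv_def by auto
    have "dist E r (pt v p) \<le> s" using TN'[OF r(1,2)] by simp
    then have "dist E v r \<le> s - 1" using r(3) dsym[of v r] by simp
    then show "r \<in> nbhd E (s - 1) v Q" using r(1) unfolding nbhd_def by simp
  qed
  have "length (downlist (inp pay v) p) = card (idf ` {r \<in> Qb v. p \<in> Cv v r})"
    using downlist_inp[OF assms(1)] by simp
  also have "\<dots> \<le> card {r \<in> Qb v. p \<in> Cv v r}" by (rule card_image_le) (use finQb in simp)
  also have "\<dots> \<le> card (nbhd E (s - 1) v Q)" by (rule card_mono[OF finnb sub])
  also have "\<dots> \<le> lam" by (rule lamb[OF assms(1)])
  finally show ?thesis .
qed

lemma len_up:
  assumes "v \<in> V" "p < deg v"
  shows "length (uplist (inp pay v) p) \<le> lam"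
proof -
  let ?u = "pt v p"
  have vu: "(v, ?u) \<in> E" using pt_E[OF assms] .
  have po: "port_of deg pt v ?u = p" using port_of_pt[OF assms] .
  have sub: "{r \<in> Qb v. Pv v r = Some p} \<subseteq> nbhd E (s - 1) ?u Q"
  proof
    fix r assume "r \<in> {r \<in> Qb v. Pv v r = Some p}"
    then have r: "r \<in> Qb v" "Pv v r = Some (port_of deg pt v ?u)" using po by auto
    then have "dist E r ?u + 1 = dist E r v" using pv_some[OF assms(1) r(1) vu] by blast
    moreover have "dist E r v \<le> s" "r \<in> Q" using r(1) unfolding Qb_def by auto
    ultimately show "r \<in> nbhd E (s - 1) ?u Q" unfolding nbhd_def using dsym[of ?u r] by simp
  qed
  have "length (uplist (inp pay v) p) = card (idf ` {r \<in> Qb v. Pv v r = Some p})"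
    using uplist_inp[OF assms(1)] by simp
  also have "\<dots> \<le> card {r \<in> Qb v. Pv v r = Some p}" by (rule card_image_le) (use finQb in simp)
  also have "\<dots> \<le> card (nbhd E (s - 1) ?u Q)" by (rule card_mono[OF finnb sub])
  also have "\<dots> \<le> lam" by (rule lamb[OF pt_V[OF assms]])
  finally show ?thesis .
qed

lemma idf_in_up:
  assumes "v \<in> V" "r \<in> Qb v" "v \<noteq> r"
  shows "idf r \<in> set (uplist (inp pay v) (port_of deg pt v (tree_parent E r (Tr r) v)))"
proof -
  have "Pv v r = Some (port_of deg pt v (tree_parent E r (Tr r) v))" using assms(3) unfolding Pv_def by simp
  then show ?thesis using uplist_inp[OF assms(1)] assms(2) finQb by auto
qed

end

definition pad :: "nat \<Rightarrow> bool list \<Rightarrow> bool list" where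
  "pad b xs = take b (xs @ replicate b False)"

lemma len_pad[simp]: "length (pad b xs) = b" unfolding pad_def by simp

lemma pad_id: "length xs = b \<Longrightarrow> pad b xs = xs" unfolding pad_def by simp

lemma pad_app: "length xs = b \<Longrightarrow> pad b (xs @ ys) = xs" unfolding pad_def by simp

fun idx :: "'a list \<Rightarrow> 'a \<Rightarrow> nat" where
  "idx [] x = 0"
| "idx (y # ys) x = (if y = x then 0 else Suc (idx ys x))"

lemma idx_ok: "x \<in> set L \<Longrightarrow> idx L x < length L \<and> L ! idx L x = x"
  by (induction L) auto

definition getseg :: "nat \<Rightarrow> bool list list \<Rightarrow> bool list \<Rightarrow> bool list \<Rightarrow> bool list" where
  "getseg b L i msg = pad b (drop (b * idx L i) msg)"

lemma drop_concat_eq: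
  "(\<forall>y\<in>set L. length (g y) = b) \<Longrightarrow> k \<le> length L \<Longrightarrow>
    drop (b * k) (concat (map g L)) = concat (map g (drop k L))"
proof (induction L arbitrary: k)
  case Nil then show ?case by simp
next
  case (Cons y L)
  show ?case
  proof (cases k)
    case 0 then show ?thesis by simp
  next
    case (Suc k')
    have "drop (b * k) (concat (map g (y # L))) = drop (b * k') (concat (map g L))"
      using Cons.prems Suc by (simp add: add.commute)
    then show ?thesis using Cons Suc by simp
  qed
qed

lemma getseg_concat:
  assumes "\<forall>y\<in>set L. length (g y) = b" "i \<in> set L"
  shows "getseg b L i (concat (map g L)) = g i"
proof -
  have k: "idx L i < length L" and ki: "L ! idx L i = i" using idx_ok[OF assms(2)] by auto
  have "drop (idx L i) L = L ! idx L i # drop (Suc (idx L i)) L"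
    by (rule Cons_nth_drop_Suc[OF k, symmetric])
  then have "drop (idx L i) L = i # drop (Suc (idx L i)) L" using ki by simp
  then have "drop (b * idx L i) (concat (map g L)) = g i @ concat (map g (drop (Suc (idx L i)) L))"
    using drop_concat_eq[OF assms(1), of "idx L i"] k assms(2) by simp
  then show ?thesis unfolding getseg_def using assms by (simp add: pad_app)
qed

lemma len_concat_map: "(\<forall>y\<in>set L. length (g y) = b) \<Longrightarrow> length (concat (map g L)) = b * length L"
  by (induction L) auto

definition chunk :: "nat \<Rightarrow> bool list \<Rightarrow> nat \<Rightarrow> bool list" where
  "chunk b S k = pad b (drop (k * b) S)"

lemma pad_nth: "i < b \<Longrightarrow> pad b X ! i = (if i < length X then X ! i else False)"
  unfolding pad_def by (simp add: nth_append)

lemma chunk_prefix: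
  assumes S: "S = P @ Z" and m: "min (length S) ((Suc k) * b) \<le> length P"
  shows "pad b (drop (k * b) P) = chunk b S k"
proof (rule nth_equalityI)
  show "length (pad b (drop (k * b) P)) = length (chunk b S k)" unfolding chunk_def by simp
next
  fix i assume "i < length (pad b (drop (k * b) P))"
  then have i: "i < b" by simp
  show "pad b (drop (k * b) P) ! i = chunk b S k ! i"
  proof (cases "k * b + i < length P")
    case True
    then show ?thesis unfolding chunk_def using i S by (simp add: pad_nth nth_append)
  next
    case False
    have "\<not> (k * b + i < length S)"
    proof
      assume "k * b + i < length S"
      then have "length P < length S" using False by simp
      then have "Suc k * b \<le> length P" using m by simp
      then show False using False i by simp
    qed
    then show ?thesis unfolding chunk_def using i False by (auto simp: pad_nth)
  qed
qed

definition ext :: "bool list \<Rightarrow> nat \<Rightarrow> bool" where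
  "ext S j = (if j < length S then S ! j else False)"

lemma chunk_ext: "chunk b S k = map (\<lambda>i. ext S (k * b + i)) [0..<b]"
  by (rule nth_equalityI) (auto simp: chunk_def pad_def ext_def nth_append)

lemma take_ext: "take n (S @ replicate n False) = map (ext S) [0..<n]"
  by (rule nth_equalityI) (auto simp: ext_def nth_append)

lemma concat_chunks':
  "concat (map (chunk b S) [0..<n]) = map (ext S) [0..<n * b]"
proof (induction n)
  case 0 then show ?case by simp
next
  case (Suc n)
  have u: "[0..<n * b + b] = [0..<n * b] @ [n * b..<n * b + b]"
    by (rule upt_add_eq_append) simp
  have m: "map (ext S) [n * b..<n * b + b] = chunk b S n"
    unfolding chunk_ext by (rule nth_equalityI) auto
  have "map (ext S) [0..<Suc n * b] = map (ext S) [0..<n * b] @ chunk b S n"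
    using u m by (simp add: add.commute)
  then show ?case using Suc by simp
qed

lemma concat_chunks:
  "concat (map (chunk b S) [0..<n]) = take (n * b) (S @ replicate (n * b) False)"
  unfolding concat_chunks' take_ext ..


definition ib :: "bool list \<Rightarrow> bool list" where "ib it = True # it"

fun scan :: "nat \<Rightarrow> bool list \<Rightarrow> bool list \<times> bool" where
  "scan L [] = ([], False)"
| "scan L (False # r) = ([], True)"
| "scan L (True # r) = (case scan L (drop L r) of (x, c) \<Rightarrow> (True # take L r @ x, c))"

fun blocks :: "nat \<Rightarrow> bool list \<Rightarrow> bool list list" where
  "blocks L [] = []"
| "blocks L (y # ys) = take L ys # blocks L (drop L ys)"

lemma blocks_ok: "(\<forall>it\<in>set xs. length it = L) \<Longrightarrow> blocks L (concat (map ib xs)) = xs"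
  by (induction xs) (auto simp: ib_def)

abbreviation "bd xs \<equiv> concat (map ib xs)"

lemma scan_body:
  "(\<forall>it\<in>set xs. length it = L) \<Longrightarrow>
   scan L (take n (bd xs @ False # F)) = (if length (bd xs) < n then (bd xs, True) else (take n (bd xs), False))"
proof (induction xs arbitrary: n)
  case Nil
  then show ?case by (cases n) auto
next
  case (Cons it xs)
  have li: "length it = L" using Cons.prems by simp
  have IH: "\<And>n. scan L (take n (bd xs @ False # F)) = (if length (bd xs) < n then (bd xs, True) else (take n (bd xs), False))"
    using Cons by simp
  show ?case
  proof (cases n)
    case 0 then show ?thesis by simp
  next
    case (Suc n')
    let ?Y = "bd xs @ False # F"
    have e: "take n (bd (it # xs) @ False # F) = True # take n' (it @ ?Y)" using Suc by (simp add: ib_def)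
    have t1: "take L (take n' (it @ ?Y)) = take n' it" using li by (simp add: min_def)
    have dl: "drop L (it @ ?Y) = ?Y" using li by simp
    have t2: "drop L (take n' (it @ ?Y)) = take (n' - L) ?Y" by (metis drop_take dl)
    show ?thesis
    proof (cases "n' < L")
      case True
      then have "n' - L = 0" by simp
      then have "scan L (take n (bd (it # xs) @ False # F)) = (True # take n' it, False)"
        using e t1 t2 by simp
      moreover have "\<not> length (bd (it # xs)) < n" using True Suc li by (simp add: ib_def)
      moreover have "take n (bd (it # xs)) = True # take n' it" using True Suc li by (simp add: ib_def)
      ultimately show ?thesis by simp
    next
      case False
      have "scan L (take n (bd (it # xs) @ False # F)) =
            (case scan L (take (n' - L) ?Y) of (x, c) \<Rightarrow> (True # it @ x, c))"
        using e t1 t2 False li by simp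
      also have "\<dots> = (if length (bd xs) < n' - L then (True # it @ bd xs, True) else (True # it @ take (n' - L) (bd xs), False))"
        using IH[of "n' - L"] by simp
      also have "\<dots> = (if length (bd (it # xs)) < n then (bd (it # xs), True) else (take n (bd (it # xs)), False))"
        using False Suc li by (auto simp: ib_def)
      finally show ?thesis .
    qed
  qed
qed

fun kpc :: "nat \<Rightarrow> bool list list \<Rightarrow> bool list" where
  "kpc L [] = [False]"
| "kpc L (r # rs) = (case scan L r of (x, c) \<Rightarrow> if c then x @ kpc L rs else x)"

lemma kpc_ok:
  "(\<forall>xs\<in>set xss. \<forall>it\<in>set xs. length it = L) \<Longrightarrow>
   (\<exists>Z. concat (map bd xss) @ [False] = kpc L (map (\<lambda>xs. take n (bd xs @ False # replicate n False)) xss) @ Z)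
   \<and> min (length (concat (map bd xss)) + 1) n \<le> length (kpc L (map (\<lambda>xs. take n (bd xs @ False # replicate n False)) xss))"
proof (induction xss)
  case Nil then show ?case by simp
next
  case (Cons xs xss)
  have l: "\<forall>it\<in>set xs. length it = L" using Cons.prems by simp
  have IH: "(\<exists>Z. concat (map bd xss) @ [False] = kpc L (map (\<lambda>xs. take n (bd xs @ False # replicate n False)) xss) @ Z)
   \<and> min (length (concat (map bd xss)) + 1) n \<le> length (kpc L (map (\<lambda>xs. take n (bd xs @ False # replicate n False)) xss))"
    using Cons by simp
  note sc = scan_body[OF l, of n "replicate n False"]
  show ?case
  proof (cases "length (bd xs) < n")
    case True
    then show ?thesis using sc IH by auto
  next
    case False
    then have K: "kpc L (map (\<lambda>xs. take n (bd xs @ False # replicate n False)) (xs # xss)) = take n (bd xs)"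
      using sc by simp
    have C: "concat (map bd (xs # xss)) @ [False] = take n (bd xs) @ (drop n (bd xs) @ concat (map bd xss) @ [False])"
      by simp
    have ln: "length (take n (bd xs)) = n" using False by simp
    show ?thesis unfolding K
    proof (intro conjI exI[of _ "drop n (bd xs) @ concat (map bd xss) @ [False]"])
      show "concat (map bd (xs # xss)) @ [False] = take n (bd xs) @ drop n (bd xs) @ concat (map bd xss) @ [False]"
        by (rule C)
      show "min (length (concat (map bd (xs # xss))) + 1) n \<le> length (take n (bd xs))" using ln by simp
    qed
  qed
qed


definition rbit :: "nat \<Rightarrow> node_input \<Rightarrow> (nat \<Rightarrow> bool list) \<Rightarrow> bool list \<Rightarrow> bool" where
  "rbit b x M i = hd (getseg b (uplist x (the (ppar x i))) i (M (the (ppar x i))))"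
definition seen :: "nat \<Rightarrow> node_input \<Rightarrow> hist \<Rightarrow> bool list \<Rightarrow> nat \<Rightarrow> bool" where
  "seen b x h i t = (ppar x i = None \<or> (\<exists>j<t. rbit b x (h ! j) i))"
definition depthOf :: "nat \<Rightarrow> node_input \<Rightarrow> hist \<Rightarrow> bool list \<Rightarrow> nat" where
  "depthOf b x h i = (LEAST t. seen b x h i t)"
definition ph1 :: "nat \<Rightarrow> node_input \<Rightarrow> hist \<Rightarrow> nat \<Rightarrow> bool list" where
  "ph1 b x h p = concat (map (\<lambda>i. pad b [seen b x h i (length h)]) (downlist x p))"

lemma run_len: "length (run f inp deg pt v R) = R"
  by (induction R) auto

lemma run_nth: "j < R \<Longrightarrow> run f inp deg pt v R ! j = (\<lambda>p. if p < deg v then f (inp (pt v p)) (run f inp deg pt (pt v p) j) (port_of deg pt (pt v p) v) else [])"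
proof (induction R)
  case 0 then show ?case by simp
next
  case (Suc R)
  show ?case
  proof (cases "j < R")
    case True
    then show ?thesis using Suc by (simp add: nth_append run_len)
  next
    case False
    then have jR: "j = R" using Suc.prems by simp
    show ?thesis unfolding jR by (simp add: nth_append run_len)
  qed
qed

locale RL = SL V E deg pt Q idf Tr s lam a
  for V E deg pt Q idf Tr s lam a +
  fixes f :: "node_input \<Rightarrow> hist \<Rightarrow> nat \<Rightarrow> bool list" and pay :: "nat \<Rightarrow> (bool list \<times> bool list) set" and b :: nat
  assumes b1: "b \<ge> 1"
  and fph1: "\<And>x h p. length h < s \<Longrightarrow> f x h p = ph1 b x h p"
begin

abbreviation "X v \<equiv> inp pay v"
abbreviation "H v t \<equiv> run f (inp pay) deg pt v t"

lemma recv_msg: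
  assumes "c \<in> V" "(c,u) \<in> E" "j < R"
  shows "(H c R ! j) (port_of deg pt c u) = f (X u) (H u j) (port_of deg pt u c)"
  using run_nth[OF assms(3), of f "inp pay" deg pt c] port_of_E[OF assms(1,2)] by simp

lemma hd_pad: "hd (pad b [z]) = z" using b1 unfolding pad_def by (cases b) auto

lemma Pv_none: "Pv v r = None \<longleftrightarrow> v = r" unfolding Pv_def by simp

lemma up_par:
  assumes "c \<in> V" "r \<in> Qb c" "c \<noteq> r"
  defines "u \<equiv> tree_parent E r (Tr r) c"
  shows "ppar (X c) (idf r) = Some (port_of deg pt c u) \<and> (c,u) \<in> E \<and> dist E r u + 1 = dist E r c
    \<and> r \<in> Qb u \<and> u \<in> V \<and> idf r \<in> set (uplist (X c) (port_of deg pt c u))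
    \<and> uplist (X c) (port_of deg pt c u) = downlist (X u) (port_of deg pt u c)"
proof -
  have rQ: "r \<in> Q" "dist E r c \<le> s" using assms(2) unfolding Qb_def by auto
  have p: "(c,u) \<in> E" "dist E r u + 1 = dist E r c" using par_nb[OF rQ(1) assms(1) rQ(2) assms(3)] u_def by auto
  have "ppar (X c) (idf r) = Some (port_of deg pt c u)"
    using ppar_inp[OF assms(1,2)] assms(3) unfolding Pv_def u_def by simp
  moreover have "r \<in> Qb u" using p rQ unfolding Qb_def by simp
  moreover have "u \<in> V" using Ein[OF p(1)] by simp
  moreover have "idf r \<in> set (uplist (X c) (port_of deg pt c u))" using idf_in_up[OF assms(1-3)] u_def by simp
  moreover have "uplist (X c) (port_of deg pt c u) = downlist (X u) (port_of deg pt u c)"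
    by (rule chan[OF assms(1) p(1)])
  ultimately show ?thesis using p by blast
qed

lemma phase1:
  "j < s \<Longrightarrow> c \<in> V \<Longrightarrow> r \<in> Qb c \<Longrightarrow> c \<noteq> r \<Longrightarrow> j < R \<Longrightarrow>
    rbit b (X c) (H c R ! j) (idf r) = (dist E r c \<le> j + 1)"
proof (induction j arbitrary: c R rule: less_induct)
  case (less j)
  define u where "u = tree_parent E r (Tr r) c"
  note U = up_par[OF less.prems(2-4), folded u_def]
  have lj: "length (H u j) < s" using less.prems(1) by (simp add: run_len)
  have "(H c R ! j) (port_of deg pt c u) = f (X u) (H u j) (port_of deg pt u c)"
    using recv_msg[OF less.prems(2)] U less.prems(5) by blast
  also have "\<dots> = ph1 b (X u) (H u j) (port_of deg pt u c)" using fph1[OF lj] .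
  finally have M: "(H c R ! j) (port_of deg pt c u) = concat (map (\<lambda>i. pad b [seen b (X u) (H u j) i j]) (downlist (X u) (port_of deg pt u c)))"
    unfolding ph1_def by (simp add: run_len)
  have e1: "idf r \<in> set (uplist (X c) (port_of deg pt c u))" and e2: "uplist (X c) (port_of deg pt c u) = downlist (X u) (port_of deg pt u c)"
    using U by blast+
  have inl: "idf r \<in> set (downlist (X u) (port_of deg pt u c))" using e1 unfolding e2 .
  have gs: "getseg b (downlist (X u) (port_of deg pt u c)) (idf r) (concat (map (\<lambda>i. pad b [seen b (X u) (H u j) i j]) (downlist (X u) (port_of deg pt u c))))
     = pad b [seen b (X u) (H u j) (idf r) j]"
    by (rule getseg_concat) (use inl in auto)
  have "rbit b (X c) (H c R ! j) (idf r) = hd (getseg b (downlist (X u) (port_of deg pt u c)) (idf r) ((H c R ! j) (port_of deg pt c u)))"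
    unfolding rbit_def using U by simp
  also have "\<dots> = seen b (X u) (H u j) (idf r) j" unfolding M gs hd_pad ..
  also have "\<dots> = (dist E r u \<le> j)"
  proof (cases "u = r")
    case True
    then show ?thesis unfolding seen_def using ppar_inp[of u r pay] U Pv_none dist_self by simp
  next
    case False
    have "ppar (X u) (idf r) \<noteq> None" using ppar_inp[of u r pay] U Pv_none False by simp
    then have "seen b (X u) (H u j) (idf r) j = (\<exists>j'<j. rbit b (X u) (H u j ! j') (idf r))"
      unfolding seen_def by blast
    also have "\<dots> = (\<exists>j'<j. dist E r u \<le> j' + 1)"
      using less.IH[of _ u j] less.prems(1) U False by auto
    also have "\<dots> = (dist E r u \<le> j)"
    proof
      assume "\<exists>j'<j. dist E r u \<le> j' + 1" then show "dist E r u \<le> j" by auto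
    next
      assume h: "dist E r u \<le> j"
      have "dist E r u \<noteq> 0" using d0 False U QV unfolding Qb_def by (metis dsym subsetD mem_Collect_eq)
      then show "\<exists>j'<j. dist E r u \<le> j' + 1" using h by (intro exI[of _ "dist E r u - 1"]) auto
    qed
    finally show ?thesis .
  qed
  also have "\<dots> = (dist E r c \<le> j + 1)" using U by auto
  finally show ?case .
qed

lemma depth_ok:
  assumes "c \<in> V" "r \<in> Qb c" "s \<le> t"
  shows "depthOf b (X c) (H c t) (idf r) = dist E r c"
proof (cases "c = r")
  case True
  then have "ppar (X c) (idf r) = None" using ppar_inp[OF assms(1,2)] Pv_none by simp
  then show ?thesis unfolding depthOf_def seen_def using True dist_self by simp
next
  case False
  have nn: "ppar (X c) (idf r) \<noteq> None" using ppar_inp[OF assms(1,2)] Pv_none False by simp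
  have ds: "dist E r c \<le> s" using assms(2) unfolding Qb_def by simp
  have d1: "dist E r c \<noteq> 0" using d0 False assms QV unfolding Qb_def by (metis dsym subsetD mem_Collect_eq)
  have rb: "\<And>j. j < s \<Longrightarrow> rbit b (X c) (H c t ! j) (idf r) = (dist E r c \<le> j + 1)"
    using phase1[OF _ assms(1,2) False] assms(3) by simp
  show ?thesis unfolding depthOf_def
  proof (rule Least_equality)
    show "seen b (X c) (H c t) (idf r) (dist E r c)"
      unfolding seen_def using rb[of "dist E r c - 1"] ds d1 by (intro disjI2 exI[of _ "dist E r c - 1"]) auto
  next
    fix y assume "seen b (X c) (H c t) (idf r) y"
    then obtain j where j: "j < y" "rbit b (X c) (H c t ! j) (idf r)" unfolding seen_def using nn by auto
    show "dist E r c \<le> y"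
    proof (rule ccontr)
      assume "\<not> dist E r c \<le> y"
      then have "j < s" "\<not> dist E r c \<le> j + 1" using j(1) ds by auto
      then show False using rb j(2) by simp
    qed
  qed
qed

end

definition segB :: "nat \<Rightarrow> nat \<Rightarrow> node_input \<Rightarrow> hist \<Rightarrow> bool list \<Rightarrow> bool list" where
  "segB s b x h i = (if ppar x i = None then pad b (drop ((length h - s) * b) (mymsg x i))
     else getseg b (uplist x (the (ppar x i))) i ((h ! (length h - 1)) (the (ppar x i))))"
definition fB :: "nat \<Rightarrow> nat \<Rightarrow> node_input \<Rightarrow> hist \<Rightarrow> nat \<Rightarrow> bool list" where
  "fB s b x h p = (if length h < s then ph1 b x h p else concat (map (segB s b x h) (downlist x p)))"
definition decB :: "nat \<Rightarrow> nat \<Rightarrow> nat \<Rightarrow> nat \<Rightarrow> node_input \<Rightarrow> hist \<Rightarrow> bool list \<Rightarrow> bool list" where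
  "decB s m b K x h i = (if ppar x i = None then mymsg x i else
     take m (concat (map (\<lambda>k. getseg b (uplist x (the (ppar x i))) i ((h ! (s + depthOf b x h i + k - 1)) (the (ppar x i)))) [0..<K])))"
definition gB :: "nat \<Rightarrow> nat \<Rightarrow> nat \<Rightarrow> nat \<Rightarrow> node_input \<Rightarrow> hist \<Rightarrow> (bool list \<times> bool list) set" where
  "gB s m b K x h = {(i, decB s m b K x h i) | i. i \<in> tids x}"

lemma len_ph1: "length (ph1 b x h p) = b * length (downlist x p)"
  unfolding ph1_def by (rule len_concat_map) simp

lemma len_segB: "length (segB s b x h i) = b" unfolding segB_def getseg_def by simp

locale BL = SL V E deg pt Q idf Tr s lam a
  for V E deg pt Q idf Tr s lam a +
  fixes msg :: "nat \<Rightarrow> bool list" and b :: nat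
  assumes bb1: "b \<ge> 1"
begin

sublocale R: RL V E deg pt Q idf Tr s lam a "fB s b" "\<lambda>v. {(idf v, msg v)}" b
  by unfold_locales (use bb1 in \<open>auto simp: fB_def\<close>)

abbreviation "XX v \<equiv> inp (\<lambda>v. {(idf v, msg v)}) v"
abbreviation "HH v t \<equiv> run (fB s b) (inp (\<lambda>v. {(idf v, msg v)})) deg pt v t"

lemma mymsgB: "v \<in> Q \<Longrightarrow> mymsg (XX v) (idf v) = msg v"
  unfolding mymsg_def mk_input_def by simp

lemma inv:
  "1 \<le> d \<Longrightarrow> c \<in> V \<Longrightarrow> r \<in> Qb c \<Longrightarrow> dist E r c = d \<Longrightarrow> s + d + k - 1 < R \<Longrightarrow>
   getseg b (uplist (XX c) (port_of deg pt c (tree_parent E r (Tr r) c))) (idf r)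
     ((HH c R ! (s + d + k - 1)) (port_of deg pt c (tree_parent E r (Tr r) c))) = chunk b (msg r) k"
proof (induction d arbitrary: c R)
  case 0 then show ?case by simp
next
  case (Suc d)
  have cr: "c \<noteq> r" using Suc.prems(4) dist_self by auto
  define u where "u = tree_parent E r (Tr r) c"
  note U = R.up_par[OF Suc.prems(2,3) cr, folded u_def]
  define j where "j = s + Suc d + k - 1"
  have js: "\<not> length (HH u j) < s" unfolding j_def by (simp add: run_len)
  have e1: "idf r \<in> set (uplist (XX c) (port_of deg pt c u))" and e2: "uplist (XX c) (port_of deg pt c u) = downlist (XX u) (port_of deg pt u c)"
    using U by blast+
  have inl: "idf r \<in> set (downlist (XX u) (port_of deg pt u c))" using e1 unfolding e2 .
  have "(HH c R ! j) (port_of deg pt c u) = fB s b (XX u) (HH u j) (port_of deg pt u c)"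
    using R.recv_msg[OF Suc.prems(2)] U Suc.prems(5) unfolding j_def by blast
  also have "\<dots> = concat (map (segB s b (XX u) (HH u j)) (downlist (XX u) (port_of deg pt u c)))"
    using js unfolding fB_def by simp
  finally have M: "(HH c R ! j) (port_of deg pt c u) = concat (map (segB s b (XX u) (HH u j)) (downlist (XX u) (port_of deg pt u c)))" .
  have "getseg b (uplist (XX c) (port_of deg pt c u)) (idf r) ((HH c R ! j) (port_of deg pt c u)) = segB s b (XX u) (HH u j) (idf r)"
    unfolding M e2 by (rule getseg_concat) (use inl len_segB in auto)
  also have "\<dots> = chunk b (msg r) k"
  proof (cases "u = r")
    case True
    have rQ: "r \<in> Q" using Suc.prems(3) unfolding Qb_def by simp
    have "ppar (XX u) (idf r) = None" using ppar_inp[of u r] U True R.Pv_none by simp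
    moreover have "length (HH u j) - s = k" using True U Suc.prems(4) dist_self unfolding j_def by (simp add: run_len)
    ultimately show ?thesis unfolding segB_def chunk_def using True mymsgB[OF rQ] by simp
  next
    case False
    define u2 where "u2 = tree_parent E r (Tr r) u"
    note U2 = R.up_par[of u r, folded u2_def]
    have U2': "ppar (XX u) (idf r) = Some (port_of deg pt u u2)" using U2 U False by blast
    have du1: "dist E r u = d" using U Suc.prems(4) by simp
    have rQ: "r \<in> Q" using Suc.prems(3) unfolding Qb_def by simp
    have "dist E r u \<noteq> 0" using d0[of r u] U False QV rQ by blast
    then have du: "dist E r u = d" "1 \<le> d" using du1 by auto
    have jj: "length (HH u j) - 1 = s + d + k - 1" using du unfolding j_def by (simp add: run_len)
    have "segB s b (XX u) (HH u j) (idf r) = getseg b (uplist (XX u) (port_of deg pt u u2)) (idf r) ((HH u j ! (s + d + k - 1)) (port_of deg pt u u2))"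
      unfolding segB_def using U2' jj by simp
    also have "\<dots> = chunk b (msg r) k"
    proof -
      have "u \<in> V" "r \<in> Qb u" using U by blast+
      moreover have "s + d + k - 1 < j" using du unfolding j_def by simp
      ultimately show ?thesis using Suc.IH[OF du(2) _ _ du(1), of j] unfolding u2_def by blast
    qed
    finally show ?thesis .
  qed
  finally show ?case unfolding u_def j_def .
qed

end

lemma len_fB: "length (fB s b x h p) = b * length (downlist x p)"
  unfolding fB_def using len_ph1 len_concat_map[of _ "segB s b x h" b] len_segB by simp

context BL begin

lemma decB_ok:
  assumes c: "c \<in> V" "r \<in> Qb c" and R: "R = 2 * s + K" and mK: "m \<le> K * b"
    and ml: "length (msg r) = m"
  shows "decB s m b K (XX c) (HH c R) (idf r) = msg r"
proof (cases "c = r")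
  case True
  have rQ: "r \<in> Q" using c(2) unfolding Qb_def by simp
  have "ppar (XX c) (idf r) = None" using ppar_inp[OF c] True R.Pv_none by simp
  then show ?thesis unfolding decB_def using mymsgB[OF rQ] True by simp
next
  case False
  define u where "u = tree_parent E r (Tr r) c"
  note U = R.up_par[OF c False, folded u_def]
  have pp: "ppar (XX c) (idf r) = Some (port_of deg pt c u)" using U by blast
  have dep: "depthOf b (XX c) (HH c R) (idf r) = dist E r c" using R.depth_ok[OF c] R by simp
  have rQ: "r \<in> Q" and ds0: "dist E r c \<le> s" using c(2) unfolding Qb_def by auto
  have "dist E r c \<noteq> 0" using d0[of r c] c(1) False QV rQ by blast
  then have ds: "dist E r c \<le> s" "1 \<le> dist E r c" using ds0 by auto
  have EQ: "map (\<lambda>k. getseg b (uplist (XX c) (port_of deg pt c u)) (idf r) ((HH c R ! (s + dist E r c + k - 1)) (port_of deg pt c u))) [0..<K]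
      = map (chunk b (msg r)) [0..<K]"
  proof (rule map_cong[OF refl])
    fix k assume "k \<in> set [0..<K]"
    then have "s + dist E r c + k - 1 < R" using ds R by simp
    then show "getseg b (uplist (XX c) (port_of deg pt c u)) (idf r) ((HH c R ! (s + dist E r c + k - 1)) (port_of deg pt c u)) = chunk b (msg r) k"
      using inv[OF ds(2) c refl] unfolding u_def by blast
  qed
  have "decB s m b K (XX c) (HH c R) (idf r) = take m (concat (map (\<lambda>k. getseg b (uplist (XX c) (port_of deg pt c u)) (idf r) ((HH c R ! (s + dist E r c + k - 1)) (port_of deg pt c u))) [0..<K]))"
    unfolding decB_def using pp dep by simp
  also have "\<dots> = take m (concat (map (chunk b (msg r)) [0..<K]))" unfolding EQ ..
  also have "\<dots> = msg r" unfolding concat_chunks using mK ml by simp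
  finally show ?thesis .
qed

lemma outB:
  assumes c: "c \<in> V" and R: "R = 2 * s + K" and mK: "m \<le> K * b"
    and ml: "\<forall>v\<in>Q. length (msg v) = m"
  shows "gB s m b K (XX c) (HH c R) = {(idf v, msg v) | v. v \<in> Q \<and> dist E v c \<le> s}"
proof -
  have "gB s m b K (XX c) (HH c R) = {(idf r, decB s m b K (XX c) (HH c R) (idf r)) | r. r \<in> Qb c}"
    unfolding gB_def tids_inp by blast
  also have "\<dots> = {(idf r, msg r) | r. r \<in> Qb c}"
    using decB_ok[OF c _ R mK] ml unfolding Qb_def by force
  finally show ?thesis unfolding Qb_def by simp
qed

lemma bwB:
  assumes "b * lam \<le> B"
  shows "bandwidth_ok B R V (fB s b) (inp (\<lambda>v. {(idf v, msg v)})) deg pt"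
  unfolding bandwidth_ok_def
proof (intro allI impI ballI)
  fix t v p assume "t < R" "v \<in> V" "p < deg v"
  then have l: "length (downlist (XX v) p) \<le> lam" using len_down by blast
  have "length (fB s b (XX v) (HH v t) p) = b * length (downlist (XX v) p)"
    by (rule len_fB)
  also have "\<dots> \<le> b * lam" using l by simp
  finally show "length (fB s b (XX v) (HH v t) p) \<le> B" using assms by simp
qed

end

definition own :: "node_input \<Rightarrow> bool list \<Rightarrow> bool list list" where
  "own x i = (if inQ x then [nid x @ mymsg x i] else [])"
definition recv :: "nat \<Rightarrow> node_input \<Rightarrow> hist \<Rightarrow> nat \<Rightarrow> bool list \<Rightarrow> nat \<Rightarrow> nat \<Rightarrow> bool list" where
  "recv b x h q i j0 n = concat (map (\<lambda>j. getseg b (downlist x q) i ((h ! (j0 + j)) q)) [0..<n])"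
definition kpQ :: "nat \<Rightarrow> nat \<Rightarrow> nat \<Rightarrow> node_input \<Rightarrow> hist \<Rightarrow> bool list \<Rightarrow> nat \<Rightarrow> bool list" where
  "kpQ s b L x h i d = bd (own x i) @ kpc L (map (\<lambda>q. recv b x h q i (2*s - d - 1) (length h - (2*s - d - 1))) (sorted_list_of_set (pch x i)))"
definition segQ :: "nat \<Rightarrow> nat \<Rightarrow> nat \<Rightarrow> node_input \<Rightarrow> hist \<Rightarrow> bool list \<Rightarrow> bool list" where
  "segQ s b L x h i = (if 2*s - depthOf b x h i \<le> length h
     then pad b (drop ((length h - (2*s - depthOf b x h i)) * b) (kpQ s b L x h i (depthOf b x h i))) else pad b [])"
definition fQ :: "nat \<Rightarrow> nat \<Rightarrow> nat \<Rightarrow> node_input \<Rightarrow> hist \<Rightarrow> nat \<Rightarrow> bool list" where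
  "fQ s b L x h p = (if length h < s then ph1 b x h p else concat (map (segQ s b L x h) (uplist x p)))"
definition gQ :: "nat \<Rightarrow> nat \<Rightarrow> nat \<Rightarrow> nat \<Rightarrow> nat \<Rightarrow> node_input \<Rightarrow> hist \<Rightarrow> (bool list \<times> bool list) set" where
  "gQ s a b L K x h = {(nid x, mymsg x (nid x))} \<union>
     (\<Union>q \<in> pch x (nid x). set (map (\<lambda>it. (take a it, drop a it)) (blocks L (fst (scan L (recv b x h q (nid x) (2*s - 1) K))))))"

lemma len_segQ: "length (segQ s b L x h i) = b" unfolding segQ_def by simp

lemma len_fQ: "length (fQ s b L x h p) \<le> b * max (length (downlist x p)) (length (uplist x p))"
  unfolding fQ_def using len_ph1 len_concat_map[of _ "segQ s b L x h" b] len_segQ by simp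

lemma distinct_concat_map:
  "distinct xs \<Longrightarrow> (\<forall>x\<in>set xs. distinct (g x)) \<Longrightarrow>
   (\<forall>x\<in>set xs. \<forall>y\<in>set xs. x \<noteq> y \<longrightarrow> set (g x) \<inter> set (g y) = {}) \<Longrightarrow> distinct (concat (map g xs))"
  by (induction xs) auto

context SL begin

definition "childs r c = map (pt c) (sorted_list_of_set (Cv c r))"
definition "ownN c = (if c \<in> Q then [c] else [])"

fun nodesF :: "nat \<Rightarrow> nat \<Rightarrow> nat \<Rightarrow> nat list" where
  "nodesF r 0 c = ownN c"
| "nodesF r (Suc n) c = ownN c @ concat (map (nodesF r n) (childs r c))"

definition "nodes r c = nodesF r (s - dist E r c) c"

lemma finCv: "finite (Cv c r)" unfolding Cv_def by simp

lemma child: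
  assumes c: "c \<in> V" "r \<in> Qb c" "q \<in> Cv c r"
  defines "ci \<equiv> pt c q"
  shows "ci \<in> V \<and> (c,ci) \<in> E \<and> r \<in> Qb ci \<and> dist E r ci = dist E r c + 1 \<and> ci \<noteq> r
    \<and> tree_parent E r (Tr r) ci = c \<and> q < deg c \<and> port_of deg pt c ci = q"
proof -
  have q: "q < deg c" "(c, ci) \<in> Tr r" "dist E r ci = dist E r c + 1" using c(3) unfolding Cv_def ci_def by auto
  have rQ: "r \<in> Q" using c(2) unfolding Qb_def by simp
  have ciV: "ci \<in> V" "dist E r ci \<le> s" using TN'[OF rQ q(2)] by auto
  have "(ci, c) \<in> Tr r" using q(2) symT[OF rQ] by (auto dest: symD)
  then have "tree_parent E r (Tr r) ci = c" using par_eq[OF rQ] q(3) by simp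
  moreover have "ci \<noteq> r" using q(3) dist_self by (metis add_is_0 one_neq_zero)
  moreover have "(c, ci) \<in> E" using pt_E[OF c(1) q(1)] ci_def by simp
  moreover have "port_of deg pt c ci = q" using port_of_pt[OF c(1) q(1)] ci_def by simp
  ultimately show ?thesis using q ciV rQ unfolding Qb_def by simp
qed

lemma childs_set: "c \<in> V \<Longrightarrow> r \<in> Qb c \<Longrightarrow> ci \<in> set (childs r c) \<Longrightarrow> \<exists>q \<in> Cv c r. ci = pt c q"
  unfolding childs_def using finCv by auto

lemma nodes_unfold:
  assumes c: "c \<in> V" "r \<in> Qb c"
  shows "nodes r c = ownN c @ concat (map (nodes r) (childs r c))"
proof (cases "dist E r c < s")
  case True
  then obtain n where n: "s - dist E r c = Suc n" by (metis Suc_diff_Suc)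
  have "map (nodesF r n) (childs r c) = map (nodes r) (childs r c)"
  proof (rule map_cong[OF refl])
    fix ci assume "ci \<in> set (childs r c)"
    then obtain q where q: "q \<in> Cv c r" "ci = pt c q" using childs_set[OF c] by blast
    have "dist E r ci = dist E r c + 1" using child[OF c q(1)] q(2) by simp
    then have e: "s - dist E r ci = n" using n by arith
    show "nodesF r n ci = nodes r ci" unfolding nodes_def e ..
  qed
  then have "nodes r c = ownN c @ concat (map (nodesF r n) (childs r c))" unfolding nodes_def using n by simp
  then show ?thesis using \<open>map (nodesF r n) (childs r c) = map (nodes r) (childs r c)\<close> by simp
next
  case False
  have "Cv c r = {}"
  proof (rule ccontr)
    assume "Cv c r \<noteq> {}"
    then obtain q where q: "q \<in> Cv c r" by blast
    have "r \<in> Qb (pt c q)" "dist E r (pt c q) = dist E r c + 1" using child[OF c q] by auto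
    then show False using False unfolding Qb_def by simp
  qed
  then have "childs r c = []" unfolding childs_def by simp
  moreover have "s - dist E r c = 0" using False by simp
  ultimately show ?thesis unfolding nodes_def by simp
qed

lemma nodes_sound:
  "c \<in> V \<Longrightarrow> r \<in> Qb c \<Longrightarrow> v \<in> set (nodes r c) \<Longrightarrow>
   v \<in> Q \<and> v \<in> V \<and> dist E r c \<le> dist E r v \<and> dist E r v \<le> s \<and> dist E c v \<le> dist E r v - dist E r c
   \<and> (tree_parent E r (Tr r) ^^ (dist E r v - dist E r c)) v = c"
proof (induction "s - dist E r c" arbitrary: c rule: less_induct)
  case less
  have "v \<in> set (ownN c) \<or> (\<exists>ci \<in> set (childs r c). v \<in> set (nodes r ci))"
    using less.prems(3) nodes_unfold[OF less.prems(1,2)] by auto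
  then show ?case
  proof
    assume "v \<in> set (ownN c)"
    then have "v = c" "c \<in> Q" unfolding ownN_def by (auto split: if_splits)
    then show ?thesis using less.prems(1,2) dist_self unfolding Qb_def by simp
  next
    assume "\<exists>ci \<in> set (childs r c). v \<in> set (nodes r ci)"
    then obtain q where q: "q \<in> Cv c r" "v \<in> set (nodes r (pt c q))" using childs_set[OF less.prems(1,2)] by blast
    define ci where "ci = pt c q"
    note C = child[OF less.prems(1,2) q(1), folded ci_def]
    have lt: "s - dist E r ci < s - dist E r c" using C unfolding Qb_def by auto
    have IH: "v \<in> Q \<and> v \<in> V \<and> dist E r ci \<le> dist E r v \<and> dist E r v \<le> s \<and> dist E ci v \<le> dist E r v - dist E r ci
      \<and> (tree_parent E r (Tr r) ^^ (dist E r v - dist E r ci)) v = ci"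
      using less.hyps[OF lt] C q(2) unfolding ci_def by blast
    have "dist E v c \<le> dist E v ci + 1" using dadj[of v ci c] C IH Esym by blast
    moreover have "dist E ci v \<le> dist E r v - dist E r ci" "dist E r ci \<le> dist E r v" using IH by auto
    moreover have "dist E r ci = dist E r c + 1" using C by simp
    moreover have "dist E c v = dist E v c" "dist E ci v = dist E v ci" using dsym by auto
    ultimately have d1: "dist E c v \<le> dist E r v - dist E r c" by linarith
    have "dist E r ci \<le> dist E r v" "dist E r ci = dist E r c + 1" using IH C by auto
    then have e: "dist E r v - dist E r c = Suc (dist E r v - dist E r ci)" by arith
    have "(tree_parent E r (Tr r) ^^ (dist E r v - dist E r c)) v = c"
      unfolding e using IH C by simp
    then show ?thesis using IH C d1 by simp
  qed
qed

lemma nodes_distinct: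
  "c \<in> V \<Longrightarrow> r \<in> Qb c \<Longrightarrow> distinct (nodes r c)"
proof (induction "s - dist E r c" arbitrary: c rule: less_induct)
  case less
  have dch: "distinct (childs r c)" unfolding childs_def
  proof (rule distinct_map[THEN iffD2], intro conjI)
    show "distinct (sorted_list_of_set (Cv c r))" by simp
    have "set (sorted_list_of_set (Cv c r)) \<subseteq> {..<deg c}" using finCv unfolding Cv_def by auto
    then show "inj_on (pt c) (set (sorted_list_of_set (Cv c r)))"
      using bij_betw_imp_inj_on[OF pbij[OF less.prems(1)]] inj_on_subset by blast
  qed
  have D: "\<forall>ci\<in>set (childs r c). distinct (nodes r ci)"
  proof
    fix ci assume "ci \<in> set (childs r c)"
    then obtain q where q: "q \<in> Cv c r" "ci = pt c q" using childs_set[OF less.prems] by blast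
    note C = child[OF less.prems q(1), folded q(2)]
    have lt: "s - dist E r ci < s - dist E r c" using C unfolding Qb_def by auto
    show "distinct (nodes r ci)" using less.hyps[OF lt] C by blast
  qed
  have CH: "ci \<in> V \<and> r \<in> Qb ci \<and> dist E r ci = dist E r c + 1" if cin: "ci \<in> set (childs r c)" for ci
  proof -
    obtain q where q: "q \<in> Cv c r" "ci = pt c q" using childs_set[OF less.prems cin] by blast
    show ?thesis using child[OF less.prems q(1)] q(2) by simp
  qed
  have disj: "\<forall>x\<in>set (childs r c). \<forall>y\<in>set (childs r c). x \<noteq> y \<longrightarrow> set (nodes r x) \<inter> set (nodes r y) = {}"
  proof (intro ballI impI)
    fix x y assume xy: "x \<in> set (childs r c)" "y \<in> set (childs r c)" "x \<noteq> y"
    show "set (nodes r x) \<inter> set (nodes r y) = {}"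
    proof (rule ccontr)
      assume "set (nodes r x) \<inter> set (nodes r y) \<noteq> {}"
      then obtain v where v: "v \<in> set (nodes r x)" "v \<in> set (nodes r y)" by blast
      have x1: "x \<in> V" "r \<in> Qb x" using CH[OF xy(1)] by auto
      have y1: "y \<in> V" "r \<in> Qb y" using CH[OF xy(2)] by auto
      have "(tree_parent E r (Tr r) ^^ (dist E r v - dist E r x)) v = x"
        using nodes_sound[OF x1 v(1)] by simp
      moreover have "(tree_parent E r (Tr r) ^^ (dist E r v - dist E r y)) v = y"
        using nodes_sound[OF y1 v(2)] by simp
      moreover have "dist E r x = dist E r y" using CH xy by simp
      ultimately show False using xy(3) by simp
    qed
  qed
  have "distinct (concat (map (nodes r) (childs r c)))"
    by (rule distinct_concat_map[OF dch D disj])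
  moreover have "c \<notin> set (concat (map (nodes r) (childs r c)))"
  proof
    assume "c \<in> set (concat (map (nodes r) (childs r c)))"
    then obtain ci where ci: "ci \<in> set (childs r c)" "c \<in> set (nodes r ci)" by auto
    have c1: "ci \<in> V" "r \<in> Qb ci" "dist E r ci = dist E r c + 1" using CH[OF ci(1)] by auto
    have "dist E r ci \<le> dist E r c" using nodes_sound[OF c1(1,2) ci(2)] by simp
    then show False using c1(3) by simp
  qed
  ultimately show ?case unfolding nodes_unfold[OF less.prems] ownN_def by simp
qed

lemma nodes_len:
  assumes "c \<in> V" "r \<in> Qb c" "c \<noteq> r"
  shows "length (nodes r c) \<le> lam"
proof -
  have "dist E r c \<noteq> 0" using d0[of r c] assms QV unfolding Qb_def by blast
  then have sub: "set (nodes r c) \<subseteq> nbhd E (s - 1) c Q"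
    using nodes_sound[OF assms(1,2)] unfolding nbhd_def by fastforce
  have "length (nodes r c) = card (set (nodes r c))"
    using distinct_card[OF nodes_distinct[OF assms(1,2)]] by simp
  also have "\<dots> \<le> card (nbhd E (s - 1) c Q)" by (rule card_mono[OF finnb sub])
  also have "\<dots> \<le> lam" by (rule lamb[OF assms(1)])
  finally show ?thesis .
qed

lemma anc:
  assumes "r \<in> Q" "v \<in> V" "dist E r v \<le> s"
  shows "j \<le> dist E r v \<Longrightarrow> (tree_parent E r (Tr r) ^^ j) v \<in> V \<and> dist E r ((tree_parent E r (Tr r) ^^ j) v) = dist E r v - j"
proof (induction j)
  case 0 then show ?case using assms by simp
next
  case (Suc j)
  define x where "x = (tree_parent E r (Tr r) ^^ j) v"
  have x: "x \<in> V" "dist E r x = dist E r v - j" using Suc x_def by auto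
  have "x \<noteq> r" using x Suc.prems dist_self by (metis Suc_le_lessD zero_less_diff less_irrefl)
  then have p: "(x, tree_parent E r (Tr r) x) \<in> E" "dist E r (tree_parent E r (Tr r) x) + 1 = dist E r x"
    using par_nb[OF assms(1) x(1)] x assms(3) by auto
  have "(tree_parent E r (Tr r) ^^ Suc j) v = tree_parent E r (Tr r) x" unfolding x_def by simp
  then show ?case using p x Ein[OF p(1)] by simp
qed

lemma nodes_complete:
  assumes r: "r \<in> Q" and v: "v \<in> Q" "v \<in> V" "dist E r v \<le> s"
  shows "(tree_parent E r (Tr r) ^^ n) v = c \<Longrightarrow> dist E r c + n = dist E r v \<Longrightarrow> v \<in> set (nodes r c)"
proof (induction n arbitrary: c)
  case 0
  then have "c = v" by simp
  moreover have "r \<in> Qb v" using r v unfolding Qb_def by simp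
  ultimately show ?case using nodes_unfold[OF v(2)] v(1) unfolding ownN_def by simp
next
  case (Suc n)
  define c' where "c' = (tree_parent E r (Tr r) ^^ n) v"
  have c': "c' \<in> V" "dist E r c' = dist E r v - n" using anc[OF r v(2,3), of n] Suc.prems unfolding c'_def by auto
  have cc: "c = tree_parent E r (Tr r) c'" using Suc.prems(1) unfolding c'_def by simp
  have dc: "dist E r c' = dist E r c + 1" using c' Suc.prems(2) by simp
  have IH: "v \<in> set (nodes r c')" using Suc.IH[OF c'_def[symmetric]] dc Suc.prems(2) by simp
  have ne: "c' \<noteq> r" using dc dist_self by (metis add_is_0 one_neq_zero)
  have ds: "dist E r c' \<le> s" using c' v(3) by simp
  have p: "(c', c) \<in> E" "(c', c) \<in> Tr r" using par_nb[OF r c'(1) ds ne] cc by auto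
  have cV: "c \<in> V" using Ein[OF p(1)] by simp
  have rc: "r \<in> Qb c" using r ds dc unfolding Qb_def by simp
  have ce: "(c, c') \<in> E" using Esym[OF p(1)] .
  have "(c, c') \<in> Tr r" using p(2) symT[OF r] by (auto dest: symD)
  then have "port_of deg pt c c' \<in> Cv c r" using cv_mem[OF cV ce] dc by simp
  moreover have "pt c (port_of deg pt c c') = c'" using port_of_E[OF cV ce] by simp
  ultimately have "c' \<in> set (childs r c)" unfolding childs_def using finCv by force
  then show ?case using nodes_unfold[OF cV rc] IH by auto
qed

lemma nodes_root:
  assumes r: "r \<in> Q"
  shows "set (nodes r r) = nbhd E s r Q"
proof
  have rr: "r \<in> V" "r \<in> Qb r" using r QV dist_self unfolding Qb_def by auto
  show "set (nodes r r) \<subseteq> nbhd E s r Q"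
    using nodes_sound[OF rr] unfolding nbhd_def by auto
next
  show "nbhd E s r Q \<subseteq> set (nodes r r)"
  proof
    fix v assume "v \<in> nbhd E s r Q"
    then have v: "v \<in> Q" "v \<in> V" "dist E r v \<le> s" using QV unfolding nbhd_def by auto
    define c where "c = (tree_parent E r (Tr r) ^^ dist E r v) v"
    have "c \<in> V" "dist E r c = 0" using anc[OF r v(2,3), of "dist E r v"] unfolding c_def by auto
    then have "c = r" using d0[of r c] r QV by auto
    then show "v \<in> set (nodes r r)" using nodes_complete[OF r v c_def[symmetric]] \<open>dist E r c = 0\<close> by simp
  qed
qed

end

locale QL = SL V E deg pt Q idf Tr s lam a
  for V E deg pt Q idf Tr s lam a +
  fixes msg :: "nat \<Rightarrow> nat \<Rightarrow> bool list" and m b :: nat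
  assumes bq1: "b \<ge> 1"
  and mlen: "\<forall>v\<in>Q. \<forall>w\<in>nbhd E s v Q. length (msg v w) = m"
begin

definition "payQ v = {(idf w, msg v w) | w. w \<in> nbhd E s v Q}"

sublocale R: RL V E deg pt Q idf Tr s lam a "fQ s b (a + m)" payQ b
  by unfold_locales (use bq1 in \<open>auto simp: fQ_def\<close>)

abbreviation "XQ v \<equiv> inp payQ v"
abbreviation "HQ v t \<equiv> run (fQ s b (a + m)) (inp payQ) deg pt v t"

definition "item r v = idf v @ msg v r"
definition "SS r c = bd (map (item r) (nodes r c)) @ [False]"

lemma mymsgQ:
  assumes "v \<in> Q" "w \<in> nbhd E s v Q"
  shows "mymsg (XQ v) (idf w) = msg v w"
  unfolding mymsg_def
proof (rule the_equality)
  show "(idf w, msg v w) \<in> payload (XQ v)" using assms unfolding mk_input_def payQ_def by auto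
next
  fix mm assume "(idf w, mm) \<in> payload (XQ v)"
  then obtain w' where w': "w' \<in> nbhd E s v Q" "idf w = idf w'" "mm = msg v w'"
    using assms unfolding mk_input_def payQ_def by auto
  have vV: "v \<in> V" using assms QV by auto
  have "nbhd E s v Q \<subseteq> nbhd E s v V" using QV unfolding nbhd_def by auto
  then have "w = w'" using idinj[OF vV] w' assms(2) inj_onD by (metis subsetD)
  then show "mm = msg v w" using w' by simp
qed

lemma ownQ:
  assumes "c \<in> V" "r \<in> Qb c"
  shows "own (XQ c) (idf r) = map (item r) (ownN c)"
proof (cases "c \<in> Q")
  case True
  have "r \<in> nbhd E s c Q" using assms unfolding Qb_def nbhd_def using dsym[of c r] by simp
  then show ?thesis using True mymsgQ unfolding own_def ownN_def item_def mk_input_def by simp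
next
  case False
  then show ?thesis unfolding own_def ownN_def mk_input_def by simp
qed

lemma item_len:
  assumes "c \<in> V" "r \<in> Qb c" "v \<in> set (nodes r c)"
  shows "length (item r v) = a + m"
proof -
  have v: "v \<in> Q" "v \<in> V" "dist E r v \<le> s" using nodes_sound[OF assms] by auto
  then have "r \<in> nbhd E s v Q" using assms(2) dsym[of v r] unfolding Qb_def nbhd_def by simp
  then show ?thesis unfolding item_def using idlen[OF v(2)] mlen v(1) by simp
qed

lemma recvL:
  assumes c: "c \<in> V" "r \<in> Qb c" "q \<in> Cv c r"
    and HI: "\<And>k. segQ s b (a + m) (XQ (pt c q)) (HQ (pt c q) (2 * s - dist E r (pt c q) + k)) (idf r) = chunk b (SS r (pt c q)) k"
    and t: "2 * s - dist E r c - 1 + n \<le> t"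
  shows "recv b (XQ c) (HQ c t) q (idf r) (2 * s - dist E r c - 1) n = take (n * b) (SS r (pt c q) @ replicate (n * b) False)"
proof -
  define ci where "ci = pt c q"
  note C = child[OF c, folded ci_def]
  have ciE: "(ci, c) \<in> E" using Esym C by blast
  have dci: "dist E r ci \<le> s" using C unfolding Qb_def by simp
  note U = R.up_par[OF _ _ , of ci r]
  have U1: "idf r \<in> set (uplist (XQ ci) (port_of deg pt ci c))" and
       U2: "uplist (XQ ci) (port_of deg pt ci c) = downlist (XQ c) (port_of deg pt c ci)"
    using R.up_par[of ci r] C by auto
  have EQ: "map (\<lambda>j. getseg b (downlist (XQ c) q) (idf r) ((HQ c t ! (2 * s - dist E r c - 1 + j)) q)) [0..<n]
      = map (chunk b (SS r ci)) [0..<n]"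
  proof (rule map_cong[OF refl])
    fix j assume "j \<in> set [0..<n]"
    then have j: "j < n" by simp
    define J where "J = 2 * s - dist E r c - 1 + j"
    have Jt: "J < t" using j t unfolding J_def by simp
    have Js: "\<not> length (HQ ci J) < s" using dci C unfolding J_def by (simp add: run_len)
    have "(HQ c t ! J) q = fQ s b (a + m) (XQ ci) (HQ ci J) (port_of deg pt ci c)"
      using R.recv_msg[OF c(1) _ Jt, of ci] C by simp
    also have "\<dots> = concat (map (segQ s b (a + m) (XQ ci) (HQ ci J)) (uplist (XQ ci) (port_of deg pt ci c)))"
      using Js unfolding fQ_def by simp
    finally have M: "(HQ c t ! J) q = concat (map (segQ s b (a + m) (XQ ci) (HQ ci J)) (uplist (XQ ci) (port_of deg pt ci c)))" .
    have dq: "downlist (XQ c) q = uplist (XQ ci) (port_of deg pt ci c)" using U2 C by simp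
    have "getseg b (downlist (XQ c) q) (idf r) ((HQ c t ! J) q) = segQ s b (a + m) (XQ ci) (HQ ci J) (idf r)"
      unfolding M dq by (rule getseg_concat) (use U1 len_segQ in auto)
    also have "\<dots> = chunk b (SS r ci) j"
    proof -
      have "J = 2 * s - dist E r ci + j" using C dci unfolding J_def by simp
      then show ?thesis using HI[of j] unfolding ci_def by simp
    qed
    finally have G: "getseg b (downlist (XQ c) q) (idf r) ((HQ c t ! J) q) = chunk b (SS r ci) j" .
    then show "getseg b (downlist (XQ c) q) (idf r) ((HQ c t ! (2 * s - dist E r c - 1 + j)) q) = chunk b (SS r ci) j"
      unfolding J_def .
  qed
  have "recv b (XQ c) (HQ c t) q (idf r) (2 * s - dist E r c - 1) n = concat (map (chunk b (SS r ci)) [0..<n])"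
    unfolding recv_def EQ ..
  then show ?thesis unfolding concat_chunks ci_def .
qed

lemma minarith: "min (y + 1) n \<le> (z::nat) \<Longrightarrow> min (x + y + 1) n \<le> x + z"
  by (simp add: min_def split: if_splits)

lemma concat_concat': "concat (concat xss) = concat (map concat xss)"
  by (induction xss) auto

lemma SS_unfold:
  assumes "c \<in> V" "r \<in> Qb c"
  shows "SS r c = bd (map (item r) (ownN c)) @ concat (map bd (map (\<lambda>ci. map (item r) (nodes r ci)) (childs r c))) @ [False]"
  unfolding SS_def nodes_unfold[OF assms] by (simp add: map_concat comp_def concat_concat')

lemma invQ:
  "c \<in> V \<Longrightarrow> r \<in> Qb c \<Longrightarrow> c \<noteq> r \<Longrightarrow>
   segQ s b (a + m) (XQ c) (HQ c (2 * s - dist E r c + k)) (idf r) = chunk b (SS r c) k"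
proof (induction "s - dist E r c" arbitrary: c k rule: less_induct)
  case less
  note c = less.prems
  define dc where "dc = dist E r c"
  define t where "t = 2 * s - dc + k"
  define h where "h = HQ c t"
  define n where "n = Suc k * b"
  have ds: "dc \<le> s" "1 \<le> dc" using c d0[of r c] QV unfolding Qb_def dc_def by auto
  have dep: "depthOf b (XQ c) h (idf r) = dc" unfolding h_def dc_def using R.depth_ok[OF c(1,2)] ds t_def dc_def by simp
  have lh: "length h = t" unfolding h_def by (simp add: run_len)
  have pc: "pch (XQ c) (idf r) = Cv c r" using pch_inp[OF c(1,2)] .
  define xss where "xss = map (\<lambda>ci. map (item r) (nodes r ci)) (childs r c)"
  have RC: "map (\<lambda>q. recv b (XQ c) h q (idf r) (2 * s - dc - 1) (length h - (2 * s - dc - 1))) (sorted_list_of_set (Cv c r))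
      = map (\<lambda>xs. take n (bd xs @ False # replicate n False)) xss"
    unfolding xss_def childs_def map_map comp_def
  proof (rule map_cong[OF refl], goal_cases)
    case (1 q)
    then have q: "q \<in> Cv c r" using finCv by simp
    note C = child[OF c(1,2) q]
    have lt: "s - dist E r (pt c q) < s - dist E r c" using C unfolding Qb_def by auto
    have HI: "\<And>k. segQ s b (a + m) (XQ (pt c q)) (HQ (pt c q) (2 * s - dist E r (pt c q) + k)) (idf r) = chunk b (SS r (pt c q)) k"
      using less.hyps[OF lt] C by blast
    have e: "length h - (2 * s - dc - 1) = Suc k" using lh ds unfolding t_def by simp
    have "recv b (XQ c) h q (idf r) (2 * s - dc - 1) (Suc k) = take n (SS r (pt c q) @ replicate n False)"
      using recvL[OF c(1,2) q HI, of "Suc k" t] ds unfolding h_def n_def dc_def t_def by simp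
    then show ?case unfolding e SS_def by (simp add: comp_def)
  qed
  have IL: "\<forall>xs\<in>set xss. \<forall>it\<in>set xs. length it = a + m"
  proof (intro ballI)
    fix xs it assume "xs \<in> set xss" "it \<in> set xs"
    then obtain ci v where ci: "ci \<in> set (childs r c)" "v \<in> set (nodes r ci)" "it = item r v"
      unfolding xss_def by auto
    obtain q where q: "q \<in> Cv c r" "ci = pt c q" using childs_set[OF c(1,2) ci(1)] by blast
    note C = child[OF c(1,2) q(1)]
    show "length it = a + m" using item_len[of ci r v] C q ci by simp
  qed
  note KP = kpc_ok[OF IL, of n]
  define P where "P = kpQ s b (a + m) (XQ c) h (idf r) dc"
  have P: "P = bd (map (item r) (ownN c)) @ kpc (a + m) (map (\<lambda>xs. take n (bd xs @ False # replicate n False)) xss)"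
    unfolding P_def kpQ_def pc RC[symmetric] ownQ[OF c(1,2)] ..
  obtain Z where Z: "concat (map bd xss) @ [False] = kpc (a + m) (map (\<lambda>xs. take n (bd xs @ False # replicate n False)) xss) @ Z"
    using KP by blast
  have SSe: "SS r c = bd (map (item r) (ownN c)) @ concat (map bd xss) @ [False]"
    unfolding xss_def by (rule SS_unfold[OF c(1,2)])
  have S1: "SS r c = P @ Z" unfolding SSe P using Z by simp
  have k1: "min (length (concat (map bd xss)) + 1) n \<le> length (kpc (a + m) (map (\<lambda>xs. take n (bd xs @ False # replicate n False)) xss))"
    using KP by blast
  have S2: "min (length (SS r c)) (Suc k * b) \<le> length P"
    unfolding SSe P n_def[symmetric] using minarith[OF k1, of "length (bd (map (item r) (ownN c)))"] by simp
  have "segQ s b (a + m) (XQ c) h (idf r) = pad b (drop (k * b) P)"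
    unfolding segQ_def dep P_def using lh ds unfolding t_def by simp
  also have "\<dots> = chunk b (SS r c) k" by (rule chunk_prefix[OF S1 S2])
  finally show ?case unfolding h_def t_def dc_def .
qed

lemma len_bd: "\<forall>it\<in>set xs. length it = l \<Longrightarrow> length (bd xs) = (l + 1) * length xs"
  by (induction xs) (auto simp: ib_def)

lemma child_out:
  assumes w: "w \<in> Q" and q: "q \<in> Cv w w" and R: "R = 2 * s + K" and K: "(a + m + 1) * lam < K * b"
  shows "set (map (\<lambda>it. (take a it, drop a it)) (blocks (a + m) (fst (scan (a + m) (recv b (XQ w) (HQ w R) q (idf w) (2 * s - 1) K)))))
     = (\<lambda>v. (idf v, msg v w)) ` set (nodes w (pt w q))"
proof -
  have wV: "w \<in> V" and wb: "w \<in> Qb w" using w QV dist_self unfolding Qb_def by auto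
  define ci where "ci = pt w q"
  note C = child[OF wV wb q, folded ci_def]
  have HI: "\<And>k. segQ s b (a + m) (XQ (pt w q)) (HQ (pt w q) (2 * s - dist E w (pt w q) + k)) (idf w) = chunk b (SS w (pt w q)) k"
  proof -
    fix k
    have "ci \<in> V" "w \<in> Qb ci" "ci \<noteq> w" using C by auto
    then show "segQ s b (a + m) (XQ (pt w q)) (HQ (pt w q) (2 * s - dist E w (pt w q) + k)) (idf w) = chunk b (SS w (pt w q)) k"
      using invQ[of ci w k] unfolding ci_def by simp
  qed
  have "recv b (XQ w) (HQ w R) q (idf w) (2 * s - dist E w w - 1) K = take (K * b) (SS w ci @ replicate (K * b) False)"
    using recvL[OF wV wb q HI, of K R] R unfolding ci_def by simp
  then have rv: "recv b (XQ w) (HQ w R) q (idf w) (2 * s - 1) K = take (K * b) (bd (map (item w) (nodes w ci)) @ False # replicate (K * b) False)"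
    using dist_self[of E w] unfolding SS_def by simp
  have IL: "\<forall>it\<in>set (map (item w) (nodes w ci)). length it = a + m" using item_len[of ci w] C by auto
  have "length (bd (map (item w) (nodes w ci))) = (a + m + 1) * length (nodes w ci)"
    using len_bd[OF IL] by simp
  also have "\<dots> \<le> (a + m + 1) * lam" using nodes_len[of ci w] C by (intro mult_le_mono2) simp
  finally have lt: "length (bd (map (item w) (nodes w ci))) < K * b" using K by simp
  have "fst (scan (a + m) (recv b (XQ w) (HQ w R) q (idf w) (2 * s - 1) K)) = bd (map (item w) (nodes w ci))"
    unfolding rv scan_body[OF IL] using lt by simp
  then have "blocks (a + m) (fst (scan (a + m) (recv b (XQ w) (HQ w R) q (idf w) (2 * s - 1) K))) = map (item w) (nodes w ci)"
    using blocks_ok[OF IL] by simp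
  moreover have "\<And>v. v \<in> set (nodes w ci) \<Longrightarrow> take a (item w v) = idf v \<and> drop a (item w v) = msg v w"
    unfolding item_def using nodes_sound[of ci w] C idlen by auto
  ultimately show ?thesis unfolding ci_def by force
qed

lemma outQ:
  assumes w: "w \<in> Q" and R: "R = 2 * s + K" and K: "(a + m + 1) * lam < K * b"
  shows "gQ s a b (a + m) K (XQ w) (HQ w R) = {(idf v, msg v w) | v. v \<in> nbhd E s w Q}"
proof -
  have wV: "w \<in> V" and wb: "w \<in> Qb w" using w QV dist_self unfolding Qb_def by auto
  have nid: "nid (XQ w) = idf w" unfolding mk_input_def by simp
  have wn: "w \<in> nbhd E s w Q" using w dist_self unfolding nbhd_def by auto
  have "gQ s a b (a + m) K (XQ w) (HQ w R) = {(idf w, msg w w)} \<union> (\<Union>q \<in> Cv w w. (\<lambda>v. (idf v, msg v w)) ` set (nodes w (pt w q)))"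
    unfolding gQ_def nid pch_inp[OF wV wb] mymsgQ[OF w wn] using child_out[OF w _ R K] by simp
  also have "\<dots> = (\<lambda>v. (idf v, msg v w)) ` set (nodes w w)"
    unfolding nodes_unfold[OF wV wb] ownN_def childs_def using w finCv by auto
  also have "\<dots> = {(idf v, msg v w) | v. v \<in> nbhd E s w Q}" unfolding nodes_root[OF w] by blast
  finally show ?thesis .
qed

lemma bwQ:
  assumes "b * lam \<le> B"
  shows "bandwidth_ok B R V (fQ s b (a + m)) (inp payQ) deg pt"
  unfolding bandwidth_ok_def
proof (intro allI impI ballI)
  fix t v p assume "t < R" "v \<in> V" "p < deg v"
  then have l: "length (downlist (XQ v) p) \<le> lam" "length (uplist (XQ v) p) \<le> lam" using len_down len_up by blast+
  have "length (fQ s b (a + m) (XQ v) (HQ v t) p) \<le> b * max (length (downlist (XQ v) p)) (length (uplist (XQ v) p))"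
    by (rule len_fQ)
  also have "\<dots> \<le> b * lam" using l by simp
  finally show "length (fQ s b (a + m) (XQ v) (HQ v t) p) \<le> B" using assms by simp
qed

end

lemma bdiv: "1 \<le> (lam::nat) \<Longrightarrow> lam \<le> B \<Longrightarrow> B \<le> 2 * lam * (B div lam) \<and> 1 \<le> B div lam \<and> (B div lam) * lam \<le> B"
proof -
  assume l: "1 \<le> lam" "lam \<le> B"
  have "lam div lam \<le> B div lam" by (rule div_le_mono[OF l(2)])
  then have q: "1 \<le> B div lam" using l by simp
  have e: "B = lam * (B div lam) + B mod lam" by simp
  have "B mod lam < lam" using l by simp
  then have "B < lam * (B div lam) + lam" using e by linarith
  also have "\<dots> \<le> 2 * lam * (B div lam)" using q by simp
  finally show ?thesis using q by (simp add: mult.commute)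
qed

lemma lin4: "(r::real) \<le> 2 * s + 1 + 2 * X \<Longrightarrow> 0 \<le> X \<Longrightarrow> 1 \<le> s \<Longrightarrow> r \<le> 4 * (s + X)"
  by (simp add: algebra_simps)

lemma broadcast_part:
  assumes s: "s \<ge> 1" and l: "lam \<ge> 1" "B \<ge> lam"
  shows "\<exists>R f g. real R \<le> 4 * (real s + real m * real lam / real B) \<and> solves_broadcast s lam m a B R f g"
proof -
  define b where "b = B div lam"
  define K where "K = m div b + 1"
  define R where "R = 2 * s + K"
  have bb: "B \<le> 2 * lam * b" "1 \<le> b" "b * lam \<le> B" using bdiv[OF l] unfolding b_def by auto
  have mK: "m \<le> K * b"
  proof -
    have "m mod b < b" using bb(2) by simp
    moreover have "m = m div b * b + m mod b" by simp
    moreover have "K * b = m div b * b + b" unfolding K_def by (simp add: algebra_simps)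
    ultimately show ?thesis by linarith
  qed
  have sol: "solves_broadcast s lam m a B R (fB s b) (gB s m b K)"
    unfolding solves_broadcast_def Let_def
  proof (intro allI impI conjI ballI)
    fix V E deg pt Q idf Tr and msg :: "nat \<Rightarrow> bool list"
    assume A: "setting V E deg pt Q idf Tr s lam a \<and> (\<forall>v\<in>Q. length (msg v) = m)"
    interpret BL V E deg pt Q idf Tr s lam a msg b
      by unfold_locales (use A bb in auto)
    show "bandwidth_ok B R V (fB s b) (mk_input V E deg pt Q idf Tr s (\<lambda>v. {(idf v, msg v)})) deg pt"
      by (rule bwB[OF bb(3)])
    fix w assume "w \<in> V"
    show "gB s m b K (mk_input V E deg pt Q idf Tr s (\<lambda>v. {(idf v, msg v)}) w)
          (run (fB s b) (mk_input V E deg pt Q idf Tr s (\<lambda>v. {(idf v, msg v)})) deg pt w R) =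
          {(idf v, msg v) |v. v \<in> Q \<and> dist E v w \<le> s}"
      by (rule outB[OF \<open>w \<in> V\<close> R_def mK]) (use A in auto)
  qed
  have Bp: "real B > 0" using l by simp
  have "real (m div b) \<le> real m / real b" by (rule of_nat_div_le_of_nat)
  also have "\<dots> \<le> 2 * real m * real lam / real B"
  proof -
    have a: "real B \<le> real b * (real lam * 2)" using bb(1) by (metis of_nat_le_iff of_nat_mult of_nat_numeral mult.commute mult.assoc)
    have "real B * real m \<le> real b * (real lam * 2) * real m" by (rule mult_right_mono[OF a]) simp
    then show ?thesis using bb(2) Bp by (simp add: field_simps)
  qed
  finally have r1: "real R \<le> 2 * real s + 1 + 2 * real m * real lam / real B" unfolding R_def K_def by simp
  have x0: "0 \<le> real m * real lam / real B" by simp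
  have s1: "1 \<le> real s" using s by simp
  define X where "X = real m * real lam / real B"
  have r2: "real R \<le> 2 * real s + 1 + 2 * X" using r1 unfolding X_def by simp
  have x1: "0 \<le> X" unfolding X_def by simp
  have "real R \<le> 4 * (real s + X)" by (rule lin4[OF r2 x1 s1])
  then have "real R \<le> 4 * (real s + real m * real lam / real B)" unfolding X_def .
  then show ?thesis using sol by blast
qed

lemma lin4q: "(r::real) \<le> 2 * s + 1 + 2 * Y \<Longrightarrow> Y \<le> 4 * X \<Longrightarrow> 0 \<le> X \<Longrightarrow> 1 \<le> s \<Longrightarrow> r \<le> 8 * (s + X)"
  by (simp add: algebra_simps)

lemma q_a0:
  assumes s: "s \<ge> 1" and l: "lam \<ge> 1" "B \<ge> lam"
  shows "solves_Qmessage s lam m 0 B 0 (\<lambda>x h p. []) (\<lambda>x h. payload x)"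
  unfolding solves_Qmessage_def Let_def
proof (intro allI impI conjI ballI)
  fix V E deg pt Q idf Tr and msg :: "nat \<Rightarrow> nat \<Rightarrow> bool list"
  assume A: "setting V E deg pt Q idf Tr s lam 0 \<and> (\<forall>v\<in>Q. \<forall>w\<in>nbhd E s v Q. length (msg v w) = m)"
  interpret SL V E deg pt Q idf Tr s lam 0 by unfold_locales (use A in auto)
  show "bandwidth_ok B 0 V (\<lambda>x h p. []) (mk_input V E deg pt Q idf Tr s (\<lambda>v. {(idf w, msg v w) |w. w \<in> nbhd E s v Q})) deg pt"
    unfolding bandwidth_ok_def by simp
  fix w assume w: "w \<in> Q"
  have wV: "w \<in> V" using w QV by auto
  have single: "nbhd E s w Q = {w}"
  proof
    show "{w} \<subseteq> nbhd E s w Q" using w dist_self unfolding nbhd_def by auto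
    show "nbhd E s w Q \<subseteq> {w}"
    proof
      fix v assume v: "v \<in> nbhd E s w Q"
      have sub: "nbhd E s w Q \<subseteq> nbhd E s w V" using QV unfolding nbhd_def by auto
      have "w \<in> nbhd E s w V" using wV dist_self unfolding nbhd_def by auto
      moreover have "idf v = idf w" using idlen[OF wV] idlen v sub unfolding nbhd_def by auto
      ultimately show "v \<in> {w}" using idinj[OF wV] v sub inj_onD by (metis singleton_iff subsetD)
    qed
  qed
  show "payload (mk_input V E deg pt Q idf Tr s (\<lambda>v. {(idf w, msg v w) |w. w \<in> nbhd E s v Q}) w) =
        {(idf v, msg v w) |v. v \<in> nbhd E s w Q}"
    unfolding mk_input_def using w single by simp
qed

lemma q_part:
  assumes s: "s \<ge> 1" and l: "lam \<ge> 1" "B \<ge> lam" and a: "a \<ge> 1"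
  shows "\<exists>R f g. real R \<le> 8 * (real s + (real m + real a) * real lam ^ 2 / real B) \<and> solves_Qmessage s lam m a B R f g"
proof -
  define b where "b = B div lam"
  define K where "K = (a + m + 1) * lam div b + 1"
  define R where "R = 2 * s + K"
  have bb: "B \<le> 2 * lam * b" "1 \<le> b" "b * lam \<le> B" using bdiv[OF l] unfolding b_def by auto
  have Kb: "(a + m + 1) * lam < K * b"
  proof -
    have "(a + m + 1) * lam mod b < b" using bb(2) by simp
    moreover have "(a + m + 1) * lam = (a + m + 1) * lam div b * b + (a + m + 1) * lam mod b" by simp
    moreover have "K * b = (a + m + 1) * lam div b * b + b" unfolding K_def by (simp add: algebra_simps)
    ultimately show ?thesis by linarith
  qed
  have sol: "solves_Qmessage s lam m a B R (fQ s b (a + m)) (gQ s a b (a + m) K)"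
    unfolding solves_Qmessage_def Let_def
  proof (intro allI impI conjI ballI)
    fix V E deg pt Q idf Tr and msg :: "nat \<Rightarrow> nat \<Rightarrow> bool list"
    assume A: "setting V E deg pt Q idf Tr s lam a \<and> (\<forall>v\<in>Q. \<forall>w\<in>nbhd E s v Q. length (msg v w) = m)"
    interpret QL V E deg pt Q idf Tr s lam a msg m b
      by unfold_locales (use A bb in auto)
    have pq: "(\<lambda>v. {(idf w, msg v w) |w. w \<in> nbhd E s v Q}) = payQ" unfolding payQ_def by (rule ext) simp
    show "bandwidth_ok B R V (fQ s b (a + m)) (mk_input V E deg pt Q idf Tr s (\<lambda>v. {(idf w, msg v w) |w. w \<in> nbhd E s v Q})) deg pt"
      unfolding pq by (rule bwQ[OF bb(3)])
    fix w assume "w \<in> Q"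
    show "gQ s a b (a + m) K (mk_input V E deg pt Q idf Tr s (\<lambda>v. {(idf w, msg v w) |w. w \<in> nbhd E s v Q}) w)
          (run (fQ s b (a + m)) (mk_input V E deg pt Q idf Tr s (\<lambda>v. {(idf w, msg v w) |w. w \<in> nbhd E s v Q})) deg pt w R) =
          {(idf v, msg v w) |v. v \<in> nbhd E s w Q}"
      unfolding pq by (rule outQ[OF \<open>w \<in> Q\<close> R_def Kb])
  qed
  have Bp: "real B > 0" using l by simp
  define X where "X = (real m + real a) * real lam ^ 2 / real B"
  define Y where "Y = real ((a + m + 1) * lam) / real b"
  have "real ((a + m + 1) * lam div b) \<le> Y" unfolding Y_def by (rule of_nat_div_le_of_nat)
  then have r2: "real R \<le> 2 * real s + 1 + 2 * Y" unfolding R_def K_def using Bp by simp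
  have YX: "Y \<le> 4 * X"
  proof -
    have a1: "real B \<le> real b * (real lam * 2)" using bb(1) by (metis of_nat_le_iff of_nat_mult of_nat_numeral mult.commute mult.assoc)
    have am: "real a + real m + 1 \<le> 2 * (real m + real a)" using a by simp
    have "Y = (real a + real m + 1) * real lam / real b" unfolding Y_def by (simp add: algebra_simps)
    also have "\<dots> \<le> (2 * (real m + real a)) * real lam / real b"
      using am bb(2) by (intro divide_right_mono mult_right_mono) auto
    also have "\<dots> \<le> 4 * X"
    proof -
      have "real B * (2 * (real m + real a) * real lam) \<le> real b * (real lam * 2) * (2 * (real m + real a) * real lam)"
        by (rule mult_right_mono[OF a1]) simp
      then show ?thesis unfolding X_def using bb(2) Bp by (simp add: field_simps power2_eq_square)
    qed
    finally show ?thesis .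
  qed
  have x1: "0 \<le> X" unfolding X_def by simp
  have s1: "1 \<le> real s" using s by simp
  have "real R \<le> 8 * (real s + X)" by (rule lin4q[OF r2 YX x1 s1])
  then show ?thesis using sol unfolding X_def by blast
qed

lemma main_inner:
  assumes h: "s \<ge> 1 \<and> lam \<ge> 1 \<and> B \<ge> lam"
  shows "(\<exists>R f g. real R \<le> 8 * (real s + real m * real lam / real B) \<and> solves_broadcast s lam m a B R f g)
     \<and> (\<exists>R f g. real R \<le> 8 * (real s + (real m + real a) * real lam ^ 2 / real B) \<and> solves_Qmessage s lam m a B R f g)"
proof
  obtain R f g where R: "real R \<le> 4 * (real s + real m * real lam / real B)" "solves_broadcast s lam m a B R f g"
    using broadcast_part h by blast
  have "0 \<le> real s + real m * real lam / real B" by simp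
  then have "real R \<le> 8 * (real s + real m * real lam / real B)" using R(1) by linarith
  then show "\<exists>R f g. real R \<le> 8 * (real s + real m * real lam / real B) \<and> solves_broadcast s lam m a B R f g"
    using R(2) by blast
next
  show "\<exists>R f g. real R \<le> 8 * (real s + (real m + real a) * real lam ^ 2 / real B) \<and> solves_Qmessage s lam m a B R f g"
  proof (cases "a = 0")
    case True
    have "real 0 \<le> 8 * (real s + (real m + real a) * real lam ^ 2 / real B)" by simp
    then show ?thesis using q_a0[of s lam B m] h True by blast
  next
    case False
    then show ?thesis using q_part[of s lam B a m] h by simp
  qed
qed

theorem lemma10:
  shows "\<exists>C::real. C > 0 \<and>
    (\<forall>s lam m a B :: nat. s \<ge> 1 \<and> lam \<ge> 1 \<and> B \<ge> lam \<longrightarrow>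
       (\<exists>R f g. real R \<le> C * (real s + real m * real lam / real B)
                \<and> solves_broadcast s lam m a B R f g)
     \<and> (\<exists>R f g. real R \<le> C * (real s + (real m + real a) * real lam ^ 2 / real B)
                \<and> solves_Qmessage s lam m a B R f g))"
proof -
  have A: "\<forall>s lam m a B :: nat. s \<ge> 1 \<and> lam \<ge> 1 \<and> B \<ge> lam \<longrightarrow>
       (\<exists>R f g. real R \<le> 8 * (real s + real m * real lam / real B)
                \<and> solves_broadcast s lam m a B R f g)
     \<and> (\<exists>R f g. real R \<le> 8 * (real s + (real m + real a) * real lam ^ 2 / real B)
                \<and> solves_Qmessage s lam m a B R f g)"
    using main_inner by blast
  have B: "(8::real) > 0" by simp
  show ?thesis using A B by blast
qed


end
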